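(* Let $X$ be a compact Hausdorff space which does not contain a closed subset homeomorphic to the Stone–Čech compactification $\beta\mathbb N$ of the natural numbers. Then the Hilbert $C(X)$-module $l_2(C(X))$ is $C^*$-reflexive.
   Context: For a $C^*$-algebra $A$, $l_2(A)$ is the right Hilbert $A$-module of sequences $(a_i)$ in $A$ with $\sum_i a_i^*a_i$ norm convergent, inner product $\langle a,b\rangle=\sum_i a_i^*b_i$. For a Hilbert $A$-module $M$, the dual $M'$ is the Banach $A$-module of bounded $A$-module maps $M\to A$, and the second dual $M''$ is the module of bounded $A$-module maps $M'\to A$ (with Paschke's standard conventions); there are canonical isometric inclusions $M\subseteq M''\subseteq M'$. $M$ is called $C^*$-reflexive if $M''=M$, i.e. the canonical map $M\to M''$ is surjective. *)

theory Defs
  imports "HOL-Analysis.Analysis"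
begin

definition CX :: "('a::topological_space \<Rightarrow> complex) set" where
  "CX = {f. continuous_on UNIV f}"

definition supnorm :: "('a \<Rightarrow> 'b::real_normed_vector) \<Rightarrow> real" where
  "supnorm f = (SUP t. norm (f t))"

definition l2 :: "(nat \<Rightarrow> 'a::topological_space \<Rightarrow> complex) set" where
  "l2 = {a. (\<forall>i. a i \<in> CX) \<and>
            uniformly_convergent_on UNIV (\<lambda>n t. \<Sum>i<n. cnj (a i t) * a i t)}"

definition l2_inner :: "(nat \<Rightarrow> 'a \<Rightarrow> complex) \<Rightarrow> (nat \<Rightarrow> 'a \<Rightarrow> complex) \<Rightarrow> 'a \<Rightarrow> complex" where
  "l2_inner a b = (\<lambda>t. \<Sum>i. cnj (a i t) * b i t)"

definition l2_norm :: "(nat \<Rightarrow> 'a \<Rightarrow> complex) \<Rightarrow> real" where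
  "l2_norm a = sqrt (supnorm (l2_inner a a))"

definition l2_add :: "(nat \<Rightarrow> 'a \<Rightarrow> complex) \<Rightarrow> (nat \<Rightarrow> 'a \<Rightarrow> complex) \<Rightarrow> nat \<Rightarrow> 'a \<Rightarrow> complex" where
  "l2_add a b = (\<lambda>i t. a i t + b i t)"

definition l2_scale :: "(nat \<Rightarrow> 'a \<Rightarrow> complex) \<Rightarrow> ('a \<Rightarrow> complex) \<Rightarrow> nat \<Rightarrow> 'a \<Rightarrow> complex" where
  "l2_scale a f = (\<lambda>i t. a i t * f t)"

definition dual1 :: "((nat \<Rightarrow> 'a::topological_space \<Rightarrow> complex) \<Rightarrow> ('a \<Rightarrow> complex)) set" where
  "dual1 = {\<tau>. (\<forall>a\<in>l2. \<tau> a \<in> CX) \<and>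
              (\<forall>a\<in>l2. \<forall>b\<in>l2. \<tau> (l2_add a b) = (\<lambda>t. \<tau> a t + \<tau> b t)) \<and>
              (\<forall>a\<in>l2. \<forall>f\<in>CX. \<tau> (l2_scale a f) = (\<lambda>t. \<tau> a t * f t)) \<and>
              (\<exists>C. \<forall>a\<in>l2. supnorm (\<tau> a) \<le> C * l2_norm a)}"

definition dual_norm :: "((nat \<Rightarrow> 'a::topological_space \<Rightarrow> complex) \<Rightarrow> ('a \<Rightarrow> complex)) \<Rightarrow> real" where
  "dual_norm \<tau> = Sup {supnorm (\<tau> a) | a. a \<in> l2 \<and> l2_norm a \<le> 1}"

definition dual_add where
  "dual_add \<tau> \<sigma> = (\<lambda>a t. \<tau> a t + \<sigma> a t)"

text \<open>Paschke's right module structure on M': (tau . f)(x) = f^* tau(x)\<close>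
definition dual_scale where
  "dual_scale \<tau> f = (\<lambda>a t. cnj (f t) * \<tau> a t)"

definition dual2 ::
  "(((nat \<Rightarrow> 'a::topological_space \<Rightarrow> complex) \<Rightarrow> ('a \<Rightarrow> complex)) \<Rightarrow> ('a \<Rightarrow> complex)) set" where
  "dual2 = {F. (\<forall>\<tau>\<in>dual1. F \<tau> \<in> CX) \<and>
              (\<forall>\<tau>\<in>dual1. \<forall>\<sigma>\<in>dual1. F (dual_add \<tau> \<sigma>) = (\<lambda>t. F \<tau> t + F \<sigma> t)) \<and>
              (\<forall>\<tau>\<in>dual1. \<forall>f\<in>CX. F (dual_scale \<tau> f) = (\<lambda>t. F \<tau> t * f t)) \<and>
              (\<exists>C. \<forall>\<tau>\<in>dual1. supnorm (F \<tau>) \<le> C * dual_norm \<tau>)}"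

definition canonical_l2 ::
  "(nat \<Rightarrow> 'a \<Rightarrow> complex) \<Rightarrow> ((nat \<Rightarrow> 'a \<Rightarrow> complex) \<Rightarrow> ('a \<Rightarrow> complex)) \<Rightarrow> ('a \<Rightarrow> complex)" where
  "canonical_l2 x = (\<lambda>\<tau> t. cnj (\<tau> x t))"

definition l2_C_star_reflexive :: "'a::topological_space itself \<Rightarrow> bool" where
  "l2_C_star_reflexive _ \<longleftrightarrow>
     (\<forall>F \<in> (dual2 :: (((nat \<Rightarrow> 'a \<Rightarrow> complex) \<Rightarrow> ('a \<Rightarrow> complex)) \<Rightarrow> ('a \<Rightarrow> complex)) set).
        \<exists>x\<in>l2. \<forall>\<tau>\<in>dual1. F \<tau> = canonical_l2 x \<tau>)"

section \<open>Stone-Cech compactification of N as the space of ultrafilters on N\<close>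

definition ultrafilters_nat :: "nat set set set" where
  "ultrafilters_nat = {U. {} \<notin> U \<and> UNIV \<in> U \<and>
       (\<forall>A B. A \<in> U \<longrightarrow> B \<in> U \<longrightarrow> A \<inter> B \<in> U) \<and>
       (\<forall>A B. A \<in> U \<longrightarrow> A \<subseteq> B \<longrightarrow> B \<in> U) \<and>
       (\<forall>A. A \<in> U \<or> - A \<in> U)}"

definition betaN :: "nat set set topology" where
  "betaN = topology_generated_by {{U \<in> ultrafilters_nat. A \<in> U} | A. True}"

end

theory Submission
  imports Defs
begin

definition psq :: "(nat \<Rightarrow> 'a \<Rightarrow> complex) \<Rightarrow> nat \<Rightarrow> 'a \<Rightarrow> real" where
  "psq a n t = (\<Sum>i<n. (cmod (a i t))^2)"
definition ssq :: "(nat \<Rightarrow> 'a \<Rightarrow> complex) \<Rightarrow> 'a \<Rightarrow> real" where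
  "ssq a t = (\<Sum>i. (cmod (a i t))^2)"

lemma cnj_mult_self: "cnj z * z = complex_of_real ((cmod z)^2)"
proof -
  have "cnj z * z = z * cnj z" by (rule mult.commute)
  also have "\<dots> = complex_of_real ((cmod z)^2)" by (rule complex_norm_square[symmetric])
  finally show ?thesis .
qed

lemma CX_cont: "f \<in> CX \<Longrightarrow> continuous_on UNIV f" by (simp add: CX_def)

lemma cont_bounded:
  fixes f :: "'a::topological_space \<Rightarrow> 'b::real_normed_vector"
  assumes cU: "compact (UNIV::'a set)" and "continuous_on UNIV f"
  shows "\<exists>B. \<forall>t. norm (f t) \<le> B"
proof -
  have "compact (f ` UNIV)" using assms compact_continuous_image by blast
  then have "bounded (range f)" by (rule compact_imp_bounded)
  then show ?thesis by (auto simp: bounded_iff)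
qed

lemma supnorm_upper:
  assumes "\<And>t. norm (f t) \<le> B"
  shows "norm (f t) \<le> supnorm f"
  unfolding supnorm_def
  by (rule cSUP_upper) (auto intro!: bdd_aboveI2[where M=B] assms)

lemma supnorm_least:
  assumes "\<And>t. norm (f t) \<le> B"
  shows "supnorm f \<le> B"
  unfolding supnorm_def by (rule cSUP_least) (use assms in auto)

lemma supnorm_nonneg:
  assumes "\<And>t. norm (f t) \<le> B"
  shows "0 \<le> supnorm f"
  using supnorm_upper[of f B, OF assms] norm_ge_zero order_trans by blast

lemma CX_upper:
  fixes f :: "'a::topological_space \<Rightarrow> complex"
  assumes cU: "compact (UNIV::'a set)" and "f \<in> CX"
  shows "norm (f t) \<le> supnorm f"
  using cont_bounded[OF cU CX_cont[OF assms(2)]] supnorm_upper by metis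

lemma CX_supnorm_nonneg:
  fixes f :: "'a::topological_space \<Rightarrow> complex"
  assumes cU: "compact (UNIV::'a set)" and "f \<in> CX"
  shows "0 \<le> supnorm f"
  using CX_upper[OF assms] norm_ge_zero order_trans by blast

lemma psq_sum_eq: "(\<Sum>i<n. cnj (a i t) * a i t) = complex_of_real (psq a n t)"
  by (simp add: psq_def cnj_mult_self)

lemma l2D:
  fixes a :: "nat \<Rightarrow> 'a::topological_space \<Rightarrow> complex"
  assumes cU: "compact (UNIV::'a set)" and a: "a \<in> l2"
  shows l2D_CX: "a i \<in> CX"
    and l2D_summable: "summable (\<lambda>i. (cmod (a i t))^2)"
    and l2D_inner: "l2_inner a a = (\<lambda>t. complex_of_real (ssq a t))"
    and l2D_cont: "continuous_on UNIV (ssq a)"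
    and l2D_tail: "\<And>\<epsilon>. \<epsilon> > 0 \<Longrightarrow> \<exists>N. \<forall>n\<ge>N. \<forall>t. ssq a t - psq a n t < \<epsilon>"
proof -
  show "a i \<in> CX" using a by (simp add: l2_def)
  obtain l where ul: "uniform_limit UNIV (\<lambda>n t. \<Sum>i<n. cnj (a i t) * a i t) l sequentially"
    using a by (auto simp: l2_def uniformly_convergent_on_def)
  have ptw: "((\<lambda>n. complex_of_real (psq a n t)) \<longlongrightarrow> l t) sequentially" for t
    using tendsto_uniform_limitI[OF ul, of t] by (simp add: psq_sum_eq)
  have sums: "(\<lambda>i. (cmod (a i t))^2) sums Re (l t)" for t
    using tendsto_Re[OF ptw[of t]] by (simp add: sums_def psq_def)
  then show summ: "summable (\<lambda>i. (cmod (a i t))^2)" for t by (auto simp: sums_iff)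
  have ssq_eq: "ssq a t = Re (l t)" for t using sums[of t] by (simp add: ssq_def sums_iff)
  have l_eq: "l t = complex_of_real (ssq a t)" for t
  proof -
    have "((\<lambda>n. complex_of_real (psq a n t)) \<longlongrightarrow> complex_of_real (ssq a t)) sequentially"
      using sums[of t] unfolding ssq_eq[symmetric] sums_def psq_def
      by (intro tendsto_of_real) simp
    then show ?thesis using ptw LIMSEQ_unique by blast
  qed
  show "l2_inner a a = (\<lambda>t. complex_of_real (ssq a t))"
  proof
    fix t
    have "(\<lambda>i. cnj (a i t) * a i t) sums complex_of_real (ssq a t)"
      unfolding cnj_mult_self using sums_of_real[OF sums[of t]] ssq_eq by simp
    then show "l2_inner a a t = complex_of_real (ssq a t)"
      by (simp add: l2_inner_def sums_iff)
  qed
  have "continuous_on UNIV l"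
  proof (rule uniform_limit_theorem[OF _ ul])
    show "\<forall>\<^sub>F n in sequentially. continuous_on UNIV (\<lambda>t. \<Sum>i<n. cnj (a i t) * a i t)"
      using a by (intro always_eventually allI) (auto simp: l2_def CX_def intro!: continuous_intros)
  qed simp
  then show "continuous_on UNIV (ssq a)"
    unfolding ssq_eq by (intro continuous_intros)
  fix \<epsilon> :: real assume "\<epsilon> > 0"
  then have "\<forall>\<^sub>F n in sequentially. \<forall>t\<in>UNIV. dist (\<Sum>i<n. cnj (a i t) * a i t) (l t) < \<epsilon>"
    using ul by (simp add: uniform_limit_iff)
  then obtain N where N: "\<And>n t. n \<ge> N \<Longrightarrow> dist (\<Sum>i<n. cnj (a i t) * a i t) (l t) < \<epsilon>"
    by (auto simp: eventually_sequentially)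
  have "psq a n t \<le> ssq a t" for n t
    unfolding psq_def ssq_def by (rule sum_le_suminf[OF summ]) auto
  then show "\<exists>N. \<forall>n\<ge>N. \<forall>t. ssq a t - psq a n t < \<epsilon>"
  proof (intro exI[of _ N] allI impI)
    fix n t assume "N \<le> n"
    have "dist (\<Sum>i<n. cnj (a i t) * a i t) (l t) = \<bar>psq a n t - ssq a t\<bar>"
      by (simp add: psq_sum_eq l_eq dist_norm flip: of_real_diff)
    then show "ssq a t - psq a n t < \<epsilon>" using N[OF \<open>N \<le> n\<close>, of t] by linarith
  qed
qed

lemma ssq_nonneg: "summable (\<lambda>i. (cmod (a i t))^2) \<Longrightarrow> 0 \<le> ssq a t" unfolding ssq_def by (simp add: suminf_nonneg)
lemma ssq_nonneg_l2:
  fixes a :: "nat \<Rightarrow> 'a::topological_space \<Rightarrow> complex"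
  assumes cU: "compact (UNIV::'a set)" and a: "a \<in> l2"
  shows "0 \<le> ssq a t"
  by (rule ssq_nonneg, rule l2D_summable[OF cU a])

lemma psq_nonneg: "0 \<le> psq a n t" unfolding psq_def by (simp add: sum_nonneg)

lemma psq_le_ssq: "summable (\<lambda>i. (cmod (a i t))^2) \<Longrightarrow> psq a n t \<le> ssq a t"
  unfolding psq_def ssq_def by (rule sum_le_suminf) auto

lemma psq_mono: "n \<le> m \<Longrightarrow> psq a n t \<le> psq a m t"
  unfolding psq_def by (rule sum_mono2) auto

lemma psq_tendsto: "summable (\<lambda>i. (cmod (a i t))^2) \<Longrightarrow> (\<lambda>n. psq a n t) \<longlonglongrightarrow> ssq a t"
  unfolding psq_def ssq_def using summable_LIMSEQ by blast

lemma l2I: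
  fixes a :: "nat \<Rightarrow> 'a::topological_space \<Rightarrow> complex"
  assumes "\<And>i. a i \<in> CX" "\<And>t. summable (\<lambda>i. (cmod (a i t))^2)"
    and "\<And>\<epsilon>. \<epsilon>>0 \<Longrightarrow> \<exists>N. \<forall>n\<ge>N. \<forall>t. ssq a t - psq a n t < \<epsilon>"
  shows "a \<in> l2"
proof -
  have "uniform_limit UNIV (\<lambda>n t. \<Sum>i<n. cnj (a i t) * a i t) (\<lambda>t. complex_of_real (ssq a t)) sequentially"
    unfolding uniform_limit_iff
  proof (intro allI impI)
    fix \<epsilon> :: real assume "\<epsilon> > 0"
    then obtain N where N: "\<And>n t. n \<ge> N \<Longrightarrow> ssq a t - psq a n t < \<epsilon>" using assms(3) by blast
    show "\<forall>\<^sub>F n in sequentially. \<forall>t\<in>UNIV. dist (\<Sum>i<n. cnj (a i t) * a i t) (complex_of_real (ssq a t)) < \<epsilon>"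
      unfolding eventually_sequentially
    proof (intro exI[of _ N] allI impI ballI)
      fix n t assume "n \<ge> N"
      have "dist (\<Sum>i<n. cnj (a i t) * a i t) (complex_of_real (ssq a t)) = \<bar>psq a n t - ssq a t\<bar>"
        by (simp add: psq_sum_eq dist_norm flip: of_real_diff)
      also have "\<dots> = ssq a t - psq a n t" using psq_le_ssq[of a t n, OF assms(2)[of t]] by simp
      finally show "dist (\<Sum>i<n. cnj (a i t) * a i t) (complex_of_real (ssq a t)) < \<epsilon>" using N \<open>n \<ge> N\<close> by simp
    qed
  qed
  then show ?thesis using assms(1) by (auto simp: l2_def uniformly_convergent_on_def)
qed

lemma l2_norm_eq:
  fixes a :: "nat \<Rightarrow> 'a::topological_space \<Rightarrow> complex"
  assumes cU: "compact (UNIV::'a set)" and a: "a \<in> l2"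
  shows "l2_norm a = sqrt (SUP t. ssq a t)"
proof -
  have "(\<lambda>t. norm (complex_of_real (ssq a t))) = ssq a"
    using ssq_nonneg_l2[OF cU a] by (auto simp: fun_eq_iff)
  then show ?thesis unfolding l2_norm_def supnorm_def l2D_inner[OF cU a] by (simp only:)
qed

lemma ssq_le_SUP:
  fixes a :: "nat \<Rightarrow> 'a::topological_space \<Rightarrow> complex"
  assumes cU: "compact (UNIV::'a set)" and a: "a \<in> l2"
  shows "ssq a t \<le> (SUP t. ssq a t)" "0 \<le> (SUP t. ssq a t)"
proof -
  obtain B where B0: "\<And>t. norm (ssq a t) \<le> B" using cont_bounded[OF cU l2D_cont[OF cU a]] by blast
  then have B: "\<And>t. ssq a t \<le> B" by (metis abs_le_D1 real_norm_def)
  show "ssq a t \<le> (SUP t. ssq a t)" by (rule cSUP_upper) (use B in \<open>auto intro!: bdd_aboveI2[where M=B]\<close>)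
  then show "0 \<le> (SUP t. ssq a t)" using ssq_nonneg_l2[OF cU a] order_trans by blast
qed

lemma ssq_le_l2_norm:
  fixes a :: "nat \<Rightarrow> 'a::topological_space \<Rightarrow> complex"
  assumes cU: "compact (UNIV::'a set)" and a: "a \<in> l2"
  shows "ssq a t \<le> (l2_norm a)^2"
  using ssq_le_SUP[OF cU a] by (simp add: l2_norm_eq[OF cU a])

lemma l2_norm_nonneg:
  fixes a :: "nat \<Rightarrow> 'a::topological_space \<Rightarrow> complex"
  assumes cU: "compact (UNIV::'a set)" and a: "a \<in> l2"
  shows "0 \<le> l2_norm a"
  using ssq_le_SUP[OF cU a] by (simp add: l2_norm_eq[OF cU a])

lemma l2_norm_le:
  fixes a :: "nat \<Rightarrow> 'a::topological_space \<Rightarrow> complex"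
  assumes cU: "compact (UNIV::'a set)" and a: "a \<in> l2" and "\<And>t. ssq a t \<le> B"
  shows "l2_norm a \<le> sqrt B"
  unfolding l2_norm_eq[OF cU a] by (rule real_sqrt_le_mono, rule cSUP_least) (use assms in auto)

lemma CS_fin:
  "cmod (\<Sum>i\<in>I. u i * v i) \<le> sqrt (\<Sum>i\<in>I. (cmod (u i))^2) * sqrt (\<Sum>i\<in>I. (cmod (v i))^2)"
proof -
  have "cmod (\<Sum>i\<in>I. u i * v i) \<le> (\<Sum>i\<in>I. cmod (u i) * cmod (v i))"
    by (metis (no_types, lifting) norm_mult norm_sum sum.cong)
  also have "\<dots> \<le> sqrt ((\<Sum>i\<in>I. (cmod (u i))^2) * (\<Sum>i\<in>I. (cmod (v i))^2))"
    by (rule real_le_rsqrt, rule Cauchy_Schwarz_ineq_sum)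
  finally show ?thesis by (simp add: real_sqrt_mult)
qed

lemma CS_inf:
  assumes "(\<lambda>i. u i * v i) sums L"
    and "\<And>m. (\<Sum>i<m. (cmod (u i))^2) \<le> A" and "\<And>m. (\<Sum>i<m. (cmod (v i))^2) \<le> B"
  shows "cmod L \<le> sqrt A * sqrt B"
proof -
  have lim: "(\<lambda>m. cmod (\<Sum>i<m. u i * v i)) \<longlonglongrightarrow> cmod L"
    using assms(1) unfolding sums_def by (rule tendsto_norm)
  have "cmod (\<Sum>i<m. u i * v i) \<le> sqrt A * sqrt B" for m
  proof -
    have "cmod (\<Sum>i<m. u i * v i) \<le> sqrt (\<Sum>i<m. (cmod (u i))^2) * sqrt (\<Sum>i<m. (cmod (v i))^2)"
      by (rule CS_fin)
    also have "\<dots> \<le> sqrt A * sqrt B"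
      by (intro mult_mono real_sqrt_le_mono assms(2,3)) (use assms(2)[of 0] in \<open>auto intro: sum_nonneg\<close>)
    finally show ?thesis .
  qed
  then show ?thesis using lim by (intro LIMSEQ_le_const2[OF lim]) auto
qed

lemma CX_const[simp]: "(\<lambda>t. c) \<in> CX" by (simp add: CX_def)
lemma CX_zero[simp]: "(\<lambda>t. 0) \<in> CX" by (simp add: CX_def)
lemma CX_add: "f \<in> CX \<Longrightarrow> g \<in> CX \<Longrightarrow> (\<lambda>t. f t + g t) \<in> CX"
  by (auto simp: CX_def intro!: continuous_intros)
lemma CX_mult: "f \<in> CX \<Longrightarrow> g \<in> CX \<Longrightarrow> (\<lambda>t. f t * g t) \<in> CX"
  by (auto simp: CX_def intro!: continuous_intros)
lemma CX_cnj: "f \<in> CX \<Longrightarrow> (\<lambda>t. cnj (f t)) \<in> CX"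
  by (auto simp: CX_def intro!: continuous_intros)
lemma CX_sum: "(\<And>i. i \<in> I \<Longrightarrow> f i \<in> CX) \<Longrightarrow> (\<lambda>t. \<Sum>i\<in>I. f i t) \<in> CX"
  by (auto simp: CX_def intro!: continuous_intros)

definition E :: "nat \<Rightarrow> nat \<Rightarrow> 'a \<Rightarrow> complex" where "E i = (\<lambda>j t. if j = i then 1 else 0)"
definition Pl :: "nat \<Rightarrow> (nat \<Rightarrow> 'a \<Rightarrow> complex) \<Rightarrow> nat \<Rightarrow> 'a \<Rightarrow> complex"
  where "Pl n a = (\<lambda>i t. if i < n then a i t else 0)"
definition Ph :: "nat \<Rightarrow> (nat \<Rightarrow> 'a \<Rightarrow> complex) \<Rightarrow> nat \<Rightarrow> 'a \<Rightarrow> complex"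
  where "Ph n a = (\<lambda>i t. if i < n then 0 else a i t)"

lemma finsupp_l2:
  fixes b :: "nat \<Rightarrow> 'a::topological_space \<Rightarrow> complex"
  assumes "\<And>i. b i \<in> CX" "\<And>i t. i \<ge> N \<Longrightarrow> b i t = 0"
  shows "b \<in> l2"
proof (rule l2I[OF assms(1)])
  show "summable (\<lambda>i. (cmod (b i t))^2)" for t
    by (rule summable_finite[of "{..<N}"]) (use assms(2) in auto)
  fix \<epsilon> :: real assume "\<epsilon> > 0"
  have "ssq b t = psq b n t" if "n \<ge> N" for n t
    unfolding ssq_def psq_def by (rule suminf_finite) (use assms(2) that in auto)
  then show "\<exists>N. \<forall>n\<ge>N. \<forall>t. ssq b t - psq b n t < \<epsilon>" using \<open>\<epsilon> > 0\<close>
    by (intro exI[of _ N]) simp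
qed

lemma suminf_tail: "summable f \<Longrightarrow> suminf f - sum f {..<n} = (\<Sum>i. f (i + n))"
  for f :: "nat \<Rightarrow> real"
  using suminf_split_initial_segment[of f n] by simp

lemma dom_l2:
  fixes a b :: "nat \<Rightarrow> 'a::topological_space \<Rightarrow> complex"
  assumes cU: "compact (UNIV::'a set)" and a: "a \<in> l2"
    and "\<And>i. b i \<in> CX" and dom: "\<And>i t. cmod (b i t) \<le> cmod (a i t)"
  shows "b \<in> l2"
proof -
  have sa: "summable (\<lambda>i. (cmod (a i t))^2)" for t by (rule l2D_summable[OF cU a])
  have le: "(cmod (b i t))^2 \<le> (cmod (a i t))^2" for i t using dom[of i t] by (simp add: power_mono)
  have sb: "summable (\<lambda>i. (cmod (b i t))^2)" for t
    by (rule summable_comparison_test[OF _ sa]) (use le in auto)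
  show ?thesis
  proof (rule l2I[OF assms(3) sb])
    fix \<epsilon> :: real assume "\<epsilon> > 0"
    then obtain N where N: "\<And>n t. n \<ge> N \<Longrightarrow> ssq a t - psq a n t < \<epsilon>" using l2D_tail[OF cU a] by blast
    have "ssq b t - psq b n t \<le> ssq a t - psq a n t" for n t
    proof -
      have "ssq b t - psq b n t = (\<Sum>i. (cmod (b (i+n) t))^2)"
        unfolding ssq_def psq_def by (rule suminf_tail[OF sb])
      also have "\<dots> \<le> (\<Sum>i. (cmod (a (i+n) t))^2)"
      proof (rule suminf_le)
        show "summable (\<lambda>i. (cmod (b (i+n) t))^2)" using summable_iff_shift[of "\<lambda>i. (cmod (b i t))^2" n] sb by simp
        show "summable (\<lambda>i. (cmod (a (i+n) t))^2)" using summable_iff_shift[of "\<lambda>i. (cmod (a i t))^2" n] sa by simp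
      qed (use le in auto)
      also have "\<dots> = ssq a t - psq a n t"
        unfolding ssq_def psq_def by (rule suminf_tail[OF sa, symmetric])
      finally show ?thesis .
    qed
    then show "\<exists>N. \<forall>n\<ge>N. \<forall>t. ssq b t - psq b n t < \<epsilon>" using N by (meson order_le_less_trans)
  qed
qed

lemma E_l2: "E i \<in> l2"
  by (rule finsupp_l2[where N="Suc i"]) (auto simp: E_def CX_def)

lemma Pl_l2:
  fixes a :: "nat \<Rightarrow> 'a::topological_space \<Rightarrow> complex"
  assumes cU: "compact (UNIV::'a set)" and a: "a \<in> l2"
  shows "Pl n a \<in> l2"
proof (rule finsupp_l2[where N=n])
  show "Pl n a i \<in> CX" for i
    using l2D_CX[OF cU a, of i] by (cases "i < n") (auto simp: Pl_def)
qed (auto simp: Pl_def)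

lemma Ph_l2:
  fixes a :: "nat \<Rightarrow> 'a::topological_space \<Rightarrow> complex"
  assumes cU: "compact (UNIV::'a set)" and a: "a \<in> l2"
  shows "Ph n a \<in> l2"
proof (rule dom_l2[OF cU a])
  show "Ph n a i \<in> CX" for i
    using l2D_CX[OF cU a, of i] by (cases "i < n") (auto simp: Ph_def)
qed (auto simp: Ph_def)

lemma Pl_Ph: "l2_add (Pl n a) (Ph n a) = a"
  by (auto simp: l2_add_def Pl_def Ph_def fun_eq_iff)

lemma Pl_Suc: "Pl (Suc n) a = l2_add (Pl n a) (l2_scale (E n) (a n))"
  by (auto simp: l2_add_def Pl_def l2_scale_def E_def fun_eq_iff)

lemma Pl_0: "Pl 0 a = l2_scale a (\<lambda>t. 0)"
  by (auto simp: Pl_def l2_scale_def fun_eq_iff)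

lemma ssq_Ph:
  assumes "summable (\<lambda>i. (cmod (a i t))^2)"
  shows "ssq (Ph n a) t = ssq a t - psq a n t"
proof -
  have "(\<lambda>i. (cmod (a i t))^2) = (\<lambda>i. (cmod (Pl n a i t))^2 + (cmod (Ph n a i t))^2)"
    by (auto simp: Pl_def Ph_def fun_eq_iff)
  moreover have s1: "summable (\<lambda>i. (cmod (Pl n a i t))^2)"
    by (rule summable_finite[of "{..<n}"]) (auto simp: Pl_def)
  moreover have s2: "summable (\<lambda>i. (cmod (Ph n a i t))^2)"
    by (rule summable_comparison_test[OF _ assms]) (auto simp: Ph_def)
  moreover have "(\<Sum>i. (cmod (Pl n a i t))^2) = psq a n t"
    unfolding psq_def by (subst suminf_finite[of "{..<n}"]) (auto simp: Pl_def)
  ultimately show ?thesis unfolding ssq_def using suminf_add[OF s1 s2] by simp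
qed

lemma Ph_small:
  fixes a :: "nat \<Rightarrow> 'a::topological_space \<Rightarrow> complex"
  assumes cU: "compact (UNIV::'a set)" and a: "a \<in> l2" and "\<epsilon> > 0"
  shows "\<exists>N. \<forall>n\<ge>N. l2_norm (Ph n a) \<le> sqrt \<epsilon>"
proof -
  obtain N where N: "\<And>n t. n \<ge> N \<Longrightarrow> ssq a t - psq a n t < \<epsilon>" using l2D_tail[OF cU a assms(3)] by blast
  show ?thesis
  proof (intro exI[of _ N] allI impI)
    fix n assume "n \<ge> N"
    have "ssq (Ph n a) t \<le> \<epsilon>" for t
      using N[OF \<open>n \<ge> N\<close>, of t] ssq_Ph[of a t n, OF l2D_summable[OF cU a, of t]] by simp
    then show "l2_norm (Ph n a) \<le> sqrt \<epsilon>"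
      by (rule l2_norm_le[OF cU Ph_l2[OF cU a]])
  qed
qed

definition coef :: "((nat \<Rightarrow> 'a \<Rightarrow> complex) \<Rightarrow> ('a \<Rightarrow> complex)) \<Rightarrow> nat \<Rightarrow> 'a \<Rightarrow> complex"
  where "coef \<tau> = (\<lambda>i. \<tau> (E i))"

lemma d1_CX: "\<tau> \<in> dual1 \<Longrightarrow> a \<in> l2 \<Longrightarrow> \<tau> a \<in> CX" by (simp add: dual1_def)
lemma d1_add: "\<tau> \<in> dual1 \<Longrightarrow> a \<in> l2 \<Longrightarrow> b \<in> l2 \<Longrightarrow> \<tau> (l2_add a b) = (\<lambda>t. \<tau> a t + \<tau> b t)"
  by (simp add: dual1_def)
lemma d1_scale: "\<tau> \<in> dual1 \<Longrightarrow> a \<in> l2 \<Longrightarrow> f \<in> CX \<Longrightarrow> \<tau> (l2_scale a f) = (\<lambda>t. \<tau> a t * f t)"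
  by (simp add: dual1_def)

lemma d1_bound:
  fixes \<tau> :: "(nat \<Rightarrow> 'a::topological_space \<Rightarrow> complex) \<Rightarrow> ('a \<Rightarrow> complex)"
  assumes cU: "compact (UNIV::'a set)" and \<tau>: "\<tau> \<in> dual1"
  obtains C where "C \<ge> 0" "\<And>a. a \<in> l2 \<Longrightarrow> supnorm (\<tau> a) \<le> C * l2_norm a"
proof -
  have "\<exists>C. \<forall>a\<in>l2. supnorm (\<tau> a) \<le> C * l2_norm a" using \<tau> by (simp add: dual1_def)
  then obtain C where C: "\<And>a. a \<in> l2 \<Longrightarrow> supnorm (\<tau> a) \<le> C * l2_norm a" by blast
  have "supnorm (\<tau> a) \<le> max C 0 * l2_norm a" if "a \<in> l2" for a
  proof -
    have "C * l2_norm a \<le> max C 0 * l2_norm a"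
      by (rule mult_right_mono) (auto simp: l2_norm_nonneg[OF cU that])
    then show ?thesis using C[OF that] by linarith
  qed
  then show ?thesis using that[of "max C 0"] by simp
qed

lemma d1_pt:
  fixes \<tau> :: "(nat \<Rightarrow> 'a::topological_space \<Rightarrow> complex) \<Rightarrow> ('a \<Rightarrow> complex)"
  assumes cU: "compact (UNIV::'a set)" and \<tau>: "\<tau> \<in> dual1" and a: "a \<in> l2"
    and C: "\<And>a. a \<in> l2 \<Longrightarrow> supnorm (\<tau> a) \<le> C * l2_norm a"
  shows "cmod (\<tau> a t) \<le> C * l2_norm a"
  using CX_upper[OF cU d1_CX[OF \<tau> a], of t] C[OF a] by linarith

lemma scaleE_l2:
  fixes f :: "'a::topological_space \<Rightarrow> complex"
  assumes "f \<in> CX" shows "l2_scale (E n) f \<in> l2"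
proof (rule finsupp_l2[where N="Suc n"])
  show "l2_scale (E n) f i \<in> CX" for i
    using assms by (cases "i = n") (auto simp: l2_scale_def E_def)
qed (auto simp: l2_scale_def E_def)

lemma d1_zero:
  fixes \<tau> :: "(nat \<Rightarrow> 'a::topological_space \<Rightarrow> complex) \<Rightarrow> ('a \<Rightarrow> complex)"
  assumes cU: "compact (UNIV::'a set)" and \<tau>: "\<tau> \<in> dual1" and a: "a \<in> l2"
  shows "\<tau> (Pl 0 a) = (\<lambda>t. 0)"
  unfolding Pl_0 using d1_scale[OF \<tau> a, of "\<lambda>t. 0"] by simp

lemma d1_Pl:
  fixes \<tau> :: "(nat \<Rightarrow> 'a::topological_space \<Rightarrow> complex) \<Rightarrow> ('a \<Rightarrow> complex)"
  assumes cU: "compact (UNIV::'a set)" and \<tau>: "\<tau> \<in> dual1" and a: "a \<in> l2"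
  shows "\<tau> (Pl n a) = (\<lambda>t. \<Sum>i<n. coef \<tau> i t * a i t)"
proof (induction n)
  case 0 then show ?case using d1_zero[OF cU \<tau> a] by simp
next
  case (Suc n)
  have "\<tau> (Pl (Suc n) a) = (\<lambda>t. \<tau> (Pl n a) t + \<tau> (l2_scale (E n) (a n)) t)"
    unfolding Pl_Suc by (rule d1_add[OF \<tau> Pl_l2[OF cU a] scaleE_l2[OF l2D_CX[OF cU a]]])
  also have "\<tau> (l2_scale (E n) (a n)) = (\<lambda>t. coef \<tau> n t * a n t)"
    unfolding coef_def by (rule d1_scale[OF \<tau> E_l2 l2D_CX[OF cU a]])
  finally show ?case using Suc by simp
qed

lemma d1_split:
  fixes \<tau> :: "(nat \<Rightarrow> 'a::topological_space \<Rightarrow> complex) \<Rightarrow> ('a \<Rightarrow> complex)"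
  assumes cU: "compact (UNIV::'a set)" and \<tau>: "\<tau> \<in> dual1" and a: "a \<in> l2"
  shows "\<tau> a t = (\<Sum>i<n. coef \<tau> i t * a i t) + \<tau> (Ph n a) t"
proof -
  have "\<tau> a = \<tau> (l2_add (Pl n a) (Ph n a))" by (simp add: Pl_Ph)
  also have "\<dots> = (\<lambda>t. \<tau> (Pl n a) t + \<tau> (Ph n a) t)"
    by (rule d1_add[OF \<tau> Pl_l2[OF cU a] Ph_l2[OF cU a]])
  finally show ?thesis by (simp add: d1_Pl[OF cU \<tau> a])
qed

lemma d1_sums:
  fixes \<tau> :: "(nat \<Rightarrow> 'a::topological_space \<Rightarrow> complex) \<Rightarrow> ('a \<Rightarrow> complex)"
  assumes cU: "compact (UNIV::'a set)" and \<tau>: "\<tau> \<in> dual1" and a: "a \<in> l2"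
  shows "(\<lambda>i. coef \<tau> i t * a i t) sums \<tau> a t"
proof -
  obtain C where C0: "C \<ge> 0" and C: "\<And>a. a \<in> l2 \<Longrightarrow> supnorm (\<tau> a) \<le> C * l2_norm a"
    using d1_bound[OF cU \<tau>] by blast
  show ?thesis unfolding sums_def LIMSEQ_iff
  proof (intro allI impI)
    fix r :: real assume "r > 0"
    define \<epsilon> where "\<epsilon> = (r / (C+1))^2"
    have "\<epsilon> > 0" using \<open>r > 0\<close> C0 by (simp add: \<epsilon>_def)
    have se: "C * sqrt \<epsilon> < r"
    proof -
      have "sqrt \<epsilon> = r / (C+1)" using \<open>r>0\<close> C0 by (simp add: \<epsilon>_def)
      then have "C * sqrt \<epsilon> = r * (C / (C+1))" by simp
      also have "\<dots> < r * 1" using \<open>r>0\<close> C0 by (intro mult_strict_left_mono) auto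
      finally show ?thesis by simp
    qed
    obtain N where N: "\<And>n. n \<ge> N \<Longrightarrow> l2_norm (Ph n a) \<le> sqrt \<epsilon>" using Ph_small[OF cU a \<open>\<epsilon>>0\<close>] by blast
    show "\<exists>no. \<forall>n\<ge>no. cmod ((\<Sum>i<n. coef \<tau> i t * a i t) - \<tau> a t) < r"
    proof (intro exI[of _ N] allI impI)
      fix n assume "n \<ge> N"
      have "cmod ((\<Sum>i<n. coef \<tau> i t * a i t) - \<tau> a t) = cmod (\<tau> (Ph n a) t)"
        using d1_split[OF cU \<tau> a, of t n] by (simp add: norm_minus_commute)
      also have "\<dots> \<le> C * l2_norm (Ph n a)" by (rule d1_pt[OF cU \<tau> Ph_l2[OF cU a] C])
      also have "\<dots> \<le> C * sqrt \<epsilon>" using N[OF \<open>n \<ge> N\<close>] C0 by (simp add: mult_left_mono)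
      finally show "cmod ((\<Sum>i<n. coef \<tau> i t * a i t) - \<tau> a t) < r" using se by simp
    qed
  qed
qed

lemma sqrt_bound_aux:
  fixes M C :: real
  assumes "M \<ge> 0" "C \<ge> 0" "M \<le> C * sqrt M"
  shows "M \<le> C^2"
proof (cases "M = 0")
  case True then show ?thesis by simp
next
  case False
  then have "sqrt M > 0" using assms by simp
  have "sqrt M * sqrt M \<le> C * sqrt M" using assms by (simp only: real_sqrt_mult_self)
  then have "sqrt M \<le> C" using mult_right_le_imp_le[OF _ \<open>sqrt M > 0\<close>] by blast
  then have "sqrt M ^2 \<le> C^2" using \<open>sqrt M > 0\<close> by (intro power_mono) auto
  then show ?thesis using assms by simp
qed

lemma d1_coef_CX:
  "\<tau> \<in> dual1 \<Longrightarrow> coef \<tau> i \<in> CX" unfolding coef_def by (rule d1_CX[OF _ E_l2])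

lemma d1_coef_bound:
  fixes \<tau> :: "(nat \<Rightarrow> 'a::topological_space \<Rightarrow> complex) \<Rightarrow> ('a \<Rightarrow> complex)"
  assumes cU: "compact (UNIV::'a set)" and \<tau>: "\<tau> \<in> dual1"
    and C0: "C \<ge> 0" and C: "\<And>a. a \<in> l2 \<Longrightarrow> supnorm (\<tau> a) \<le> C * l2_norm a"
  shows "psq (coef \<tau>) m t \<le> C^2"
proof -
  define b where "b = (\<lambda>i t. if i < m then cnj (coef \<tau> i t) else 0)"
  have bCX: "b i \<in> CX" for i
    using CX_cnj[OF d1_coef_CX[OF \<tau>]] by (cases "i < m") (auto simp: b_def)
  have b: "b \<in> l2" by (rule finsupp_l2[OF bCX, where N=m]) (auto simp: b_def)
  have "Pl m b = b" by (auto simp: Pl_def b_def fun_eq_iff)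
  have tb: "\<tau> b t = complex_of_real (psq (coef \<tau>) m t)" for t
  proof -
    have "\<tau> b t = (\<Sum>i<m. coef \<tau> i t * b i t)" using d1_Pl[OF cU \<tau> b, of m] \<open>Pl m b = b\<close> by metis
    also have "\<dots> = (\<Sum>i<m. complex_of_real ((cmod (coef \<tau> i t))^2))"
      by (intro sum.cong refl) (simp add: b_def complex_norm_square del: of_real_power)
    also have "\<dots> = complex_of_real (psq (coef \<tau>) m t)" by (simp add: psq_def)
    finally show ?thesis .
  qed
  have ssqb: "ssq b t = psq (coef \<tau>) m t" for t
    unfolding ssq_def psq_def by (subst suminf_finite[of "{..<m}"]) (auto simp: b_def)
  define M where "M = (SUP t. ssq b t)"
  have M0: "M \<ge> 0" using ssq_le_SUP(2)[OF cU b] by (simp add: M_def)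
  have le: "psq (coef \<tau>) m t \<le> M" for t using ssq_le_SUP(1)[OF cU b, of t] by (simp add: M_def ssqb)
  have "psq (coef \<tau>) m t \<le> C * sqrt M" for t
  proof -
    have "psq (coef \<tau>) m t = cmod (\<tau> b t)" by (simp add: tb psq_nonneg)
    also have "\<dots> \<le> C * l2_norm b" by (rule d1_pt[OF cU \<tau> b C])
    finally show ?thesis by (simp add: l2_norm_eq[OF cU b] M_def)
  qed
  then have "M \<le> C * sqrt M" unfolding M_def by (intro cSUP_least) (auto simp: ssqb)
  then have "M \<le> C^2" using sqrt_bound_aux M0 C0 by blast
  then show ?thesis using le[of t] by linarith
qed

lemma sum_shift_le:
  fixes f :: "nat \<Rightarrow> real"
  shows "(\<Sum>i<m. f (i+n)) = (\<Sum>i\<in>{n..<m+n}. f i)"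
  using sum.shift_bounds_nat_ivl[of f 0 n m] by (simp add: atLeast0LessThan)

lemma CS_tail:
  assumes sums: "(\<lambda>i. u i * v i) sums L"
    and A: "\<And>m. (\<Sum>i\<in>{n..<m}. (cmod (u i))^2) \<le> A"
    and sv: "summable (\<lambda>i. (cmod (v i))^2)"
  shows "cmod (L - (\<Sum>i<n. u i * v i)) \<le> sqrt A * sqrt (\<Sum>i. (cmod (v (i+n)))^2)"
proof (rule CS_inf[where u="\<lambda>i. u (i+n)" and v="\<lambda>i. v (i+n)"])
  show "(\<lambda>i. u (i + n) * v (i + n)) sums (L - (\<Sum>i<n. u i * v i))"
    using sums_split_initial_segment[OF sums, of n] by simp
  show "(\<Sum>i<m. (cmod (u (i + n)))\<^sup>2) \<le> A" for m
    using A[of "m+n"] sum_shift_le[where f="\<lambda>i. (cmod (u i))^2" and m=m and n=n] by simp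
  have "summable (\<lambda>i. (cmod (v (i+n)))^2)" using summable_iff_shift[of "\<lambda>i. (cmod (v i))^2" n] sv by simp
  then show "(\<Sum>i<m. (cmod (v (i + n)))\<^sup>2) \<le> (\<Sum>i. (cmod (v (i+n)))^2)" for m
    by (rule sum_le_suminf) auto
qed

lemma psq_summable:
  assumes "\<And>m. psq g m t \<le> B"
  shows "summable (\<lambda>i. (cmod (g i t))^2)"
  by (rule summableI_nonneg_bounded[where x=B]) (use assms in \<open>auto simp: psq_def\<close>)

lemma psq_ivl_le:
  assumes "\<And>m. psq g m t \<le> B"
  shows "(\<Sum>i\<in>{n..<m}. (cmod (g i t))^2) \<le> B"
proof -
  have "(\<Sum>i\<in>{n..<m}. (cmod (g i t))^2) \<le> (\<Sum>i<m. (cmod (g i t))^2)"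
    by (rule sum_mono2) auto
  then show ?thesis using assms[of m] by (simp add: psq_def)
qed

lemma prod_summable:
  assumes "summable (\<lambda>i. (cmod (u i))^2)" "summable (\<lambda>i. (cmod (v i))^2)"
  shows "summable (\<lambda>i. u i * v i)"
proof -
  have sg: "summable (\<lambda>i. ((cmod (u i))^2 + (cmod (v i))^2) / 2)"
    using summable_add[OF assms] by (intro summable_divide) simp
  have bd: "norm (u i * v i) \<le> ((cmod (u i))^2 + (cmod (v i))^2) / 2" for i
  proof -
    have "0 \<le> (cmod (u i) - cmod (v i))^2" by simp
    then show ?thesis by (simp add: norm_mult power2_eq_square algebra_simps)
  qed
  have "summable (\<lambda>i. norm (u i * v i))"
    by (rule summable_comparison_test[OF _ sg]) (use bd in auto)
  then show ?thesis by (rule summable_norm_cancel)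
qed

definition tauf :: "(nat \<Rightarrow> 'a \<Rightarrow> complex) \<Rightarrow> (nat \<Rightarrow> 'a \<Rightarrow> complex) \<Rightarrow> 'a \<Rightarrow> complex"
  where "tauf g = (\<lambda>a t. \<Sum>i. g i t * a i t)"

lemma tauI:
  fixes g :: "nat \<Rightarrow> 'a::topological_space \<Rightarrow> complex"
  assumes cU: "compact (UNIV::'a set)" and gCX: "\<And>i. g i \<in> CX" and gB: "\<And>m t. psq g m t \<le> B"
  shows "tauf g \<in> dual1" "coef (tauf g) = g"
proof -
  have B0: "B \<ge> 0" using gB[of 0] by (simp add: psq_def)
  have sg: "summable (\<lambda>i. (cmod (g i t))^2)" for t by (rule psq_summable[OF gB])
  have sums: "(\<lambda>i. g i t * a i t) sums tauf g a t" if a: "a \<in> l2" for a t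
    unfolding tauf_def by (rule summable_sums, rule prod_summable[OF sg l2D_summable[OF cU a]])
  have tail: "cmod (tauf g a t - (\<Sum>i<n. g i t * a i t)) \<le> sqrt B * sqrt (ssq a t - psq a n t)"
    if a: "a \<in> l2" for a t n
    using CS_tail[OF sums[OF a, of t] psq_ivl_le[OF gB] l2D_summable[OF cU a]]
    by (simp add: ssq_def psq_def suminf_tail[OF l2D_summable[OF cU a]])
  have bnd: "cmod (tauf g a t) \<le> sqrt B * l2_norm a" if a: "a \<in> l2" for a t
  proof -
    have "cmod (tauf g a t) \<le> sqrt B * sqrt (ssq a t)" using tail[OF a, of t 0] by (simp add: psq_def)
    also have "\<dots> \<le> sqrt B * l2_norm a"
    proof (rule mult_left_mono)
      have "sqrt (ssq a t) \<le> sqrt ((l2_norm a)^2)" by (rule real_sqrt_le_mono, rule ssq_le_l2_norm[OF cU a])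
      then show "sqrt (ssq a t) \<le> l2_norm a" using l2_norm_nonneg[OF cU a] by simp
    qed (simp add: B0)
    finally show ?thesis .
  qed
  have cont: "tauf g a \<in> CX" if a: "a \<in> l2" for a
  proof -
    have ul: "uniform_limit UNIV (\<lambda>n t. \<Sum>i<n. g i t * a i t) (tauf g a) sequentially"
      unfolding uniform_limit_iff
    proof (intro allI impI)
      fix r :: real assume "r > 0"
      define \<epsilon> where "\<epsilon> = (r / (sqrt B + 1))^2"
      have sB1: "sqrt B + 1 > 0" using B0 by (simp add: add_nonneg_pos)
      have "\<epsilon> > 0" using \<open>r > 0\<close> sB1 by (simp add: \<epsilon>_def)
      have se: "sqrt B * sqrt \<epsilon> < r"
      proof -
        have "sqrt \<epsilon> = r / (sqrt B+1)" using \<open>r>0\<close> sB1 by (simp add: \<epsilon>_def)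
        then have "sqrt B * sqrt \<epsilon> = r * (sqrt B / (sqrt B+1))" by simp
        also have "\<dots> < r * 1" using \<open>r>0\<close> sB1 by (intro mult_strict_left_mono) auto
        finally show ?thesis by simp
      qed
      obtain N where N: "\<And>n t. n \<ge> N \<Longrightarrow> ssq a t - psq a n t < \<epsilon>" using l2D_tail[OF cU a \<open>\<epsilon>>0\<close>] by blast
      show "\<forall>\<^sub>F n in sequentially. \<forall>t\<in>UNIV. dist (\<Sum>i<n. g i t * a i t) (tauf g a t) < r"
        unfolding eventually_sequentially
      proof (intro exI[of _ N] allI impI ballI)
        fix n t assume "n \<ge> N"
        have "dist (\<Sum>i<n. g i t * a i t) (tauf g a t) = cmod (tauf g a t - (\<Sum>i<n. g i t * a i t))"
          by (simp add: dist_norm norm_minus_commute)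
        also have "\<dots> \<le> sqrt B * sqrt (ssq a t - psq a n t)" by (rule tail[OF a])
        also have "\<dots> \<le> sqrt B * sqrt \<epsilon>"
          using N[OF \<open>n \<ge> N\<close>, of t] B0 by (intro mult_left_mono real_sqrt_le_mono) auto
        finally show "dist (\<Sum>i<n. g i t * a i t) (tauf g a t) < r" using se by simp
      qed
    qed
    have "continuous_on UNIV (tauf g a)"
    proof (rule uniform_limit_theorem[OF _ ul])
      show "\<forall>\<^sub>F n in sequentially. continuous_on UNIV (\<lambda>t. \<Sum>i<n. g i t * a i t)"
        using gCX l2D_CX[OF cU a] by (intro always_eventually allI) (auto simp: CX_def intro!: continuous_intros)
    qed simp
    then show ?thesis by (simp add: CX_def)
  qed
  have add: "tauf g (l2_add a b) = (\<lambda>t. tauf g a t + tauf g b t)" if "a \<in> l2" "b \<in> l2" for a b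
  proof
    fix t
    have "(\<lambda>i. g i t * a i t + g i t * b i t) sums (tauf g a t + tauf g b t)"
      by (rule sums_add[OF sums[OF that(1)] sums[OF that(2)]])
    then show "tauf g (l2_add a b) t = tauf g a t + tauf g b t"
      by (simp add: tauf_def l2_add_def distrib_left sums_iff)
  qed
  have scale: "tauf g (l2_scale a f) = (\<lambda>t. tauf g a t * f t)" if "a \<in> l2" for a f
  proof
    fix t
    have "(\<lambda>i. g i t * a i t * f t) sums (tauf g a t * f t)"
      by (rule sums_mult2[OF sums[OF that]])
    then show "tauf g (l2_scale a f) t = tauf g a t * f t"
      by (simp add: tauf_def l2_scale_def mult.assoc sums_iff)
  qed
  have "supnorm (tauf g a) \<le> sqrt B * l2_norm a" if "a \<in> l2" for a
    by (rule supnorm_least, rule bnd[OF that])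
  then show "tauf g \<in> dual1" unfolding dual1_def using cont add scale by blast
  show "coef (tauf g) = g"
  proof (intro ext)
    fix i t
    have "(\<lambda>j. if j = i then g j t else 0) sums g i t" by (rule sums_single)
    moreover have "(\<lambda>j. g j t * E i j t) = (\<lambda>j. if j = i then g j t else 0)" by (auto simp: E_def)
    ultimately show "coef (tauf g) i t = g i t" by (simp add: coef_def tauf_def sums_iff)
  qed
qed

lemma haus_euc: "Hausdorff_space (euclidean :: 'a::t2_space topology)"
  unfolding Hausdorff_space_def by (metis disjnt_def hausdorff open_openin)
lemma cs_euc: "compact (UNIV::'a::topological_space set) \<Longrightarrow> compact_space (euclidean :: 'a topology)"
  by (simp add: compact_space_def)
lemma creg_euc: "compact (UNIV::'a::t2_space set) \<Longrightarrow> completely_regular_space (euclidean :: 'a topology)"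
  using compact_Hausdorff_or_regular_imp_normal_space cs_euc haus_euc normal_imp_completely_regular_space
  by blast

lemma bump:
  fixes t0 :: "'a::t2_space"
  assumes cU: "compact (UNIV::'a set)" and "open W" "t0 \<in> W"
  shows "\<exists>f::'a\<Rightarrow>real. continuous_on UNIV f \<and> f t0 = 1 \<and> (\<forall>t. 0 \<le> f t \<and> f t \<le> 1) \<and> (\<forall>t. t \<notin> W \<longrightarrow> f t = 0)"
proof -
  have "closedin euclidean (- W)" using assms by (simp add: closed_open)
  moreover have "t0 \<in> topspace euclidean - (- W)" using assms by simp
  ultimately obtain g :: "'a \<Rightarrow> real" where g: "continuous_map euclidean (top_of_set {0..1}) g"
      "g t0 = 0" "g ` (- W) \<subseteq> {1}"
    using creg_euc[OF cU] unfolding completely_regular_space_def by metis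
  have "continuous_on UNIV g \<and> g \<in> UNIV \<rightarrow> {0..1}"
    using g(1) continuous_map_subtopology_eu[of UNIV "{0..1}" g] by simp
  then show ?thesis using g(2,3)
    by (intro exI[of _ "\<lambda>t. 1 - g t"]) (auto intro!: continuous_intros)
qed

definition proj :: "nat \<Rightarrow> (nat \<Rightarrow> 'a \<Rightarrow> complex) \<Rightarrow> 'a \<Rightarrow> complex" where "proj i = (\<lambda>a. a i)"
definition xF where "xF F = (\<lambda>i t. cnj (F (proj i) t))"
definition rho :: "(nat \<Rightarrow> 'a \<Rightarrow> complex) \<Rightarrow> nat \<Rightarrow> (nat \<Rightarrow> 'a \<Rightarrow> complex) \<Rightarrow> 'a \<Rightarrow> complex"
  where "rho g n = (\<lambda>a t. \<Sum>i<n. g i t * a i t)"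
definition Zf :: "(nat \<Rightarrow> 'a \<Rightarrow> complex) \<Rightarrow> 'a \<Rightarrow> complex" where "Zf = (\<lambda>a t. 0)"

lemma supnorm_zero[simp]: "supnorm (\<lambda>t. 0::complex) = 0"
  by (simp add: supnorm_def)

lemma zero_l2: "(\<lambda>i t. 0) \<in> l2" by (rule finsupp_l2[where N=0]) auto

lemma dual_norm_le:
  fixes \<tau> :: "(nat \<Rightarrow> 'a::topological_space \<Rightarrow> complex) \<Rightarrow> ('a \<Rightarrow> complex)"
  assumes "\<And>a. a \<in> l2 \<Longrightarrow> l2_norm a \<le> 1 \<Longrightarrow> supnorm (\<tau> a) \<le> M"
  shows "dual_norm \<tau> \<le> M"
  unfolding dual_norm_def
proof (rule cSup_least)
  show "{supnorm (\<tau> a) |a. a \<in> l2 \<and> l2_norm a \<le> 1} \<noteq> {}"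
    using zero_l2 by (auto intro!: exI[of _ "\<lambda>i t. 0"] simp: l2_norm_def l2_inner_def)
qed (use assms in auto)

lemma dual_norm_nonneg:
  fixes \<tau> :: "(nat \<Rightarrow> 'a::topological_space \<Rightarrow> complex) \<Rightarrow> ('a \<Rightarrow> complex)"
  assumes cU: "compact (UNIV::'a set)" and \<tau>: "\<tau> \<in> dual1"
  shows "0 \<le> dual_norm \<tau>"
proof -
  obtain C where C0: "C \<ge> 0" and C: "\<And>a. a \<in> l2 \<Longrightarrow> supnorm (\<tau> a) \<le> C * l2_norm a"
    using d1_bound[OF cU \<tau>] by blast
  let ?S = "{supnorm (\<tau> a) |a. a \<in> l2 \<and> l2_norm a \<le> 1}"
  have bdd: "bdd_above ?S"
  proof (rule bdd_aboveI)
    fix y assume "y \<in> ?S"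
    then obtain a where "a \<in> l2" "l2_norm a \<le> 1" "y = supnorm (\<tau> a)" by blast
    then show "y \<le> C" using C[of a] C0 by (metis mult_left_le order_trans)
  qed
  have z: "(\<lambda>i (t::'a). 0::complex) \<in> l2" by (rule zero_l2)
  have "l2_norm (\<lambda>i (t::'a). 0::complex) = 0" by (simp add: l2_norm_def l2_inner_def)
  then have "supnorm (\<tau> (\<lambda>i (t::'a). 0::complex)) \<in> ?S" using z by (intro CollectI exI[of _ "\<lambda>i (t::'a). 0::complex"]) simp
  then have "supnorm (\<tau> (\<lambda>i (t::'a). 0::complex)) \<le> dual_norm \<tau>" unfolding dual_norm_def using bdd by (rule cSup_upper)
  moreover have "0 \<le> supnorm (\<tau> (\<lambda>i (t::'a). 0::complex))" by (rule CX_supnorm_nonneg[OF cU d1_CX[OF \<tau> z]])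
  ultimately show ?thesis by linarith
qed

lemma Zf_dual1: "Zf \<in> dual1"
  unfolding dual1_def Zf_def by (auto intro!: exI[of _ 0])

lemma dual_add_dual1:
  fixes \<tau> :: "(nat \<Rightarrow> 'a::topological_space \<Rightarrow> complex) \<Rightarrow> ('a \<Rightarrow> complex)"
  assumes cU: "compact (UNIV::'a set)" and \<tau>: "\<tau> \<in> dual1" and \<sigma>: "\<sigma> \<in> dual1"
  shows "dual_add \<tau> \<sigma> \<in> dual1"
proof -
  obtain C where C0: "C \<ge> 0" and C: "\<And>a. a \<in> l2 \<Longrightarrow> supnorm (\<tau> a) \<le> C * l2_norm a"
    using d1_bound[OF cU \<tau>] by blast
  obtain C' where C0': "C' \<ge> 0" and C': "\<And>a. a \<in> l2 \<Longrightarrow> supnorm (\<sigma> a) \<le> C' * l2_norm a"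
    using d1_bound[OF cU \<sigma>] by blast
  have "supnorm (dual_add \<tau> \<sigma> a) \<le> (C + C') * l2_norm a" if a: "a \<in> l2" for a
  proof (rule supnorm_least)
    fix t
    have "norm (\<tau> a t + \<sigma> a t) \<le> norm (\<tau> a t) + norm (\<sigma> a t)" by (rule norm_triangle_ineq)
    also have "\<dots> \<le> C * l2_norm a + C' * l2_norm a"
      using d1_pt[OF cU \<tau> a C, of t] d1_pt[OF cU \<sigma> a C', of t] by linarith
    finally show "norm (dual_add \<tau> \<sigma> a t) \<le> (C + C') * l2_norm a" by (simp add: dual_add_def distrib_right)
  qed
  moreover have "dual_add \<tau> \<sigma> a \<in> CX" if "a \<in> l2" for a
    unfolding dual_add_def by (rule CX_add[OF d1_CX[OF \<tau> that] d1_CX[OF \<sigma> that]])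
  moreover have "dual_add \<tau> \<sigma> (l2_add a b) = (\<lambda>t. dual_add \<tau> \<sigma> a t + dual_add \<tau> \<sigma> b t)"
    if "a \<in> l2" "b \<in> l2" for a b
    using d1_add[OF \<tau> that] d1_add[OF \<sigma> that] by (simp add: dual_add_def fun_eq_iff algebra_simps)
  moreover have "dual_add \<tau> \<sigma> (l2_scale a f) = (\<lambda>t. dual_add \<tau> \<sigma> a t * f t)"
    if "a \<in> l2" "f \<in> CX" for a f
    using d1_scale[OF \<tau> that] d1_scale[OF \<sigma> that] by (simp add: dual_add_def fun_eq_iff algebra_simps)
  ultimately show ?thesis unfolding dual1_def by blast
qed

lemma dual_scale_dual1:
  fixes \<tau> :: "(nat \<Rightarrow> 'a::topological_space \<Rightarrow> complex) \<Rightarrow> ('a \<Rightarrow> complex)"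
  assumes cU: "compact (UNIV::'a set)" and \<tau>: "\<tau> \<in> dual1" and f: "f \<in> CX"
  shows "dual_scale \<tau> f \<in> dual1"
proof -
  obtain C where C0: "C \<ge> 0" and C: "\<And>a. a \<in> l2 \<Longrightarrow> supnorm (\<tau> a) \<le> C * l2_norm a"
    using d1_bound[OF cU \<tau>] by blast
  have "supnorm (dual_scale \<tau> f a) \<le> (supnorm f * C) * l2_norm a" if a: "a \<in> l2" for a
  proof (rule supnorm_least)
    fix t
    have "norm (cnj (f t) * \<tau> a t) = norm (f t) * norm (\<tau> a t)" by (simp add: norm_mult)
    also have "\<dots> \<le> supnorm f * (C * l2_norm a)"
      by (intro mult_mono CX_upper[OF cU f] d1_pt[OF cU \<tau> a C]) (auto intro: CX_supnorm_nonneg[OF cU f])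
    finally show "norm (dual_scale \<tau> f a t) \<le> (supnorm f * C) * l2_norm a" by (simp add: dual_scale_def mult.assoc)
  qed
  moreover have "dual_scale \<tau> f a \<in> CX" if "a \<in> l2" for a
    unfolding dual_scale_def by (rule CX_mult[OF CX_cnj[OF f] d1_CX[OF \<tau> that]])
  moreover have "dual_scale \<tau> f (l2_add a b) = (\<lambda>t. dual_scale \<tau> f a t + dual_scale \<tau> f b t)"
    if "a \<in> l2" "b \<in> l2" for a b
    using d1_add[OF \<tau> that] by (simp add: dual_scale_def fun_eq_iff algebra_simps)
  moreover have "dual_scale \<tau> f (l2_scale a g) = (\<lambda>t. dual_scale \<tau> f a t * g t)"
    if "a \<in> l2" "g \<in> CX" for a g
    using d1_scale[OF \<tau> that] by (simp add: dual_scale_def fun_eq_iff algebra_simps)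
  ultimately show ?thesis unfolding dual1_def by blast
qed

lemma coord_le_l2_norm:
  fixes a :: "nat \<Rightarrow> 'a::topological_space \<Rightarrow> complex"
  assumes cU: "compact (UNIV::'a set)" and a: "a \<in> l2"
  shows "cmod (a i t) \<le> l2_norm a"
proof -
  have "(cmod (a i t))^2 \<le> psq a (Suc i) t" unfolding psq_def
    by (rule member_le_sum) auto
  also have "\<dots> \<le> ssq a t" by (rule psq_le_ssq[OF l2D_summable[OF cU a]])
  also have "\<dots> \<le> (l2_norm a)^2" by (rule ssq_le_l2_norm[OF cU a])
  finally show ?thesis using l2_norm_nonneg[OF cU a] by (rule power2_le_imp_le)
qed

lemma proj_dual1:
  fixes i :: nat
  assumes cU: "compact (UNIV::'a::topological_space set)"
  shows "(proj i :: (nat \<Rightarrow> 'a \<Rightarrow> complex) \<Rightarrow> ('a \<Rightarrow> complex)) \<in> dual1"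
proof -
  have "supnorm (proj i a) \<le> 1 * l2_norm a" if a: "a \<in> (l2 :: (nat \<Rightarrow> 'a \<Rightarrow> complex) set)" for a
    unfolding proj_def by (rule supnorm_least) (use coord_le_l2_norm[OF cU a] in simp)
  moreover have "proj i a \<in> CX" if "a \<in> (l2 :: (nat \<Rightarrow> 'a \<Rightarrow> complex) set)" for a
    unfolding proj_def by (rule l2D_CX[OF cU that])
  ultimately show ?thesis unfolding dual1_def by (auto simp: proj_def l2_add_def l2_scale_def intro!: exI[of _ 1])
qed

lemma rho_eq: "rho g (Suc n) = dual_add (rho g n) (dual_scale (proj n) (\<lambda>t. cnj (g n t)))"
  by (simp add: rho_def dual_add_def dual_scale_def proj_def fun_eq_iff)

lemma rho_0: "rho g 0 = Zf" by (simp add: rho_def Zf_def fun_eq_iff)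

lemma rho_dual1:
  fixes g :: "nat \<Rightarrow> 'a::topological_space \<Rightarrow> complex"
  assumes cU: "compact (UNIV::'a set)" and g: "\<And>i. g i \<in> CX"
  shows "rho g n \<in> dual1"
proof (induction n)
  case 0 then show ?case by (simp add: rho_0 Zf_dual1)
next
  case (Suc n) then show ?case
    unfolding rho_eq by (intro dual_add_dual1[OF cU] dual_scale_dual1[OF cU proj_dual1[OF cU]] CX_cnj g)
qed

lemma d2_CX: "F \<in> dual2 \<Longrightarrow> \<tau> \<in> dual1 \<Longrightarrow> F \<tau> \<in> CX" by (simp add: dual2_def)
lemma d2_add: "F \<in> dual2 \<Longrightarrow> \<tau> \<in> dual1 \<Longrightarrow> \<sigma> \<in> dual1 \<Longrightarrow> F (dual_add \<tau> \<sigma>) = (\<lambda>t. F \<tau> t + F \<sigma> t)"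
  by (simp add: dual2_def)
lemma d2_scale: "F \<in> dual2 \<Longrightarrow> \<tau> \<in> dual1 \<Longrightarrow> f \<in> CX \<Longrightarrow> F (dual_scale \<tau> f) = (\<lambda>t. F \<tau> t * f t)"
  by (simp add: dual2_def)

lemma d2_bound:
  fixes F :: "((nat \<Rightarrow> 'a::topological_space \<Rightarrow> complex) \<Rightarrow> ('a \<Rightarrow> complex)) \<Rightarrow> ('a \<Rightarrow> complex)"
  assumes cU: "compact (UNIV::'a set)" and F: "F \<in> dual2"
  obtains D where "D \<ge> 0" "\<And>\<tau>. \<tau> \<in> dual1 \<Longrightarrow> supnorm (F \<tau>) \<le> D * dual_norm \<tau>"
proof -
  have "\<exists>D. \<forall>\<tau>\<in>dual1. supnorm (F \<tau>) \<le> D * dual_norm \<tau>" using F by (simp add: dual2_def)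
  then obtain D where D: "\<And>\<tau>. \<tau> \<in> dual1 \<Longrightarrow> supnorm (F \<tau>) \<le> D * dual_norm \<tau>" by blast
  have "supnorm (F \<tau>) \<le> max D 0 * dual_norm \<tau>" if "\<tau> \<in> dual1" for \<tau>
  proof -
    have "D * dual_norm \<tau> \<le> max D 0 * dual_norm \<tau>"
      by (rule mult_right_mono) (auto simp: dual_norm_nonneg[OF cU that])
    then show ?thesis using D[OF that] by linarith
  qed
  then show ?thesis using that[of "max D 0"] by simp
qed

lemma d2_pt:
  fixes F :: "((nat \<Rightarrow> 'a::topological_space \<Rightarrow> complex) \<Rightarrow> ('a \<Rightarrow> complex)) \<Rightarrow> ('a \<Rightarrow> complex)"
  assumes cU: "compact (UNIV::'a set)" and F: "F \<in> dual2" and \<tau>: "\<tau> \<in> dual1"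
    and D: "\<And>\<tau>. \<tau> \<in> dual1 \<Longrightarrow> supnorm (F \<tau>) \<le> D * dual_norm \<tau>"
  shows "cmod (F \<tau> t) \<le> D * dual_norm \<tau>"
  using CX_upper[OF cU d2_CX[OF F \<tau>], of t] D[OF \<tau>] by linarith

lemma F_Zf:
  assumes F: "F \<in> dual2" shows "F Zf = (\<lambda>t. 0)"
proof -
  have "dual_add Zf Zf = Zf" by (simp add: dual_add_def Zf_def)
  then have "F Zf t = F Zf t + F Zf t" for t using d2_add[OF F Zf_dual1 Zf_dual1] by (metis)
  then show ?thesis by (metis add_cancel_right_right)
qed

lemma F_rho:
  fixes g :: "nat \<Rightarrow> 'a::topological_space \<Rightarrow> complex"
  assumes cU: "compact (UNIV::'a set)" and F: "F \<in> dual2" and g: "\<And>i. g i \<in> CX"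
  shows "F (rho g n) = (\<lambda>t. \<Sum>i<n. cnj (xF F i t) * cnj (g i t))"
proof (induction n)
  case 0 then show ?case by (simp add: rho_0 F_Zf[OF F])
next
  case (Suc n)
  have "F (rho g (Suc n)) = (\<lambda>t. F (rho g n) t + F (dual_scale (proj n) (\<lambda>t. cnj (g n t))) t)"
    unfolding rho_eq by (rule d2_add[OF F rho_dual1[OF cU g] dual_scale_dual1[OF cU proj_dual1[OF cU] CX_cnj[OF g]]])
  also have "F (dual_scale (proj n) (\<lambda>t. cnj (g n t))) = (\<lambda>t. F (proj n) t * cnj (g n t))"
    by (rule d2_scale[OF F proj_dual1[OF cU] CX_cnj[OF g]])
  finally show ?case using Suc by (simp add: xF_def)
qed

lemma F_l2eq:
  fixes F :: "((nat \<Rightarrow> 'a::topological_space \<Rightarrow> complex) \<Rightarrow> ('a \<Rightarrow> complex)) \<Rightarrow> ('a \<Rightarrow> complex)"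
  assumes cU: "compact (UNIV::'a set)" and F: "F \<in> dual2" and \<tau>: "\<tau> \<in> dual1" and \<sigma>: "\<sigma> \<in> dual1"
    and eq: "\<And>a. a \<in> l2 \<Longrightarrow> \<tau> a = \<sigma> a"
  shows "F \<tau> = F \<sigma>"
proof -
  obtain D where D0: "D \<ge> 0" and D: "\<And>\<tau>. \<tau> \<in> dual1 \<Longrightarrow> supnorm (F \<tau>) \<le> D * dual_norm \<tau>"
    using d2_bound[OF cU F] by blast
  define \<delta> where "\<delta> = dual_add \<sigma> (dual_scale \<tau> (\<lambda>t. -1))"
  have m1: "(\<lambda>t. -1) \<in> CX" by simp
  have \<delta>1: "\<delta> \<in> dual1" unfolding \<delta>_def by (intro dual_add_dual1[OF cU \<sigma>] dual_scale_dual1[OF cU \<tau> m1])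
  have "dual_norm \<delta> \<le> 0"
    by (rule dual_norm_le) (simp add: \<delta>_def dual_add_def dual_scale_def eq)
  then have "D * dual_norm \<delta> \<le> 0" using D0 by (simp add: mult_nonneg_nonpos)
  then have z: "F \<delta> t = 0" for t using d2_pt[OF cU F \<delta>1 D, of t]
    by (metis norm_le_zero_iff order_trans)
  have "F \<delta> = (\<lambda>t. F \<sigma> t + F \<tau> t * -1)"
    unfolding \<delta>_def using d2_add[OF F \<sigma> dual_scale_dual1[OF cU \<tau> m1]] d2_scale[OF F \<tau> m1] by simp
  then show ?thesis using z by (auto simp: fun_eq_iff)
qed

lemma xF_CX:
  fixes F :: "((nat \<Rightarrow> 'a::topological_space \<Rightarrow> complex) \<Rightarrow> ('a \<Rightarrow> complex)) \<Rightarrow> ('a \<Rightarrow> complex)"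
  assumes cU: "compact (UNIV::'a set)" and F: "F \<in> dual2"
  shows "xF F i \<in> CX"
  unfolding xF_def by (rule CX_cnj, rule d2_CX[OF F proj_dual1[OF cU]])

lemma reg_euc: "compact (UNIV::'a::t2_space set) \<Longrightarrow> regular_space (euclidean :: 'a topology)"
  using compact_Hausdorff_imp_regular_space cs_euc haus_euc by blast

lemma psq_cont:
  assumes "\<And>i. g i \<in> CX" shows "continuous_on UNIV (psq g m)"
proof -
  have "psq g m = (\<lambda>t. \<Sum>i<m. (cmod (g i t))^2)" by (simp add: psq_def fun_eq_iff)
  then show ?thesis using assms by (auto simp: CX_def intro!: continuous_intros)
qed

lemma xF_bound:
  fixes F :: "((nat \<Rightarrow> 'a::topological_space \<Rightarrow> complex) \<Rightarrow> ('a \<Rightarrow> complex)) \<Rightarrow> ('a \<Rightarrow> complex)"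
  assumes cU: "compact (UNIV::'a set)" and F: "F \<in> dual2" and D0: "D \<ge> 0"
    and D: "\<And>\<tau>. \<tau> \<in> dual1 \<Longrightarrow> supnorm (F \<tau>) \<le> D * dual_norm \<tau>"
  shows "psq (xF F) m t \<le> D^2"
proof -
  let ?x = "xF F"
  define g where "g = (\<lambda>i t. cnj (?x i t))"
  have xCX: "?x i \<in> CX" for i by (rule xF_CX[OF cU F])
  have gCX: "g i \<in> CX" for i unfolding g_def by (rule CX_cnj[OF xCX])
  have \<rho>: "rho g m \<in> dual1" by (rule rho_dual1[OF cU gCX])
  have Frho: "F (rho g m) t = complex_of_real (psq ?x m t)" for t
    unfolding F_rho[OF cU F gCX] by (simp add: g_def psq_def cnj_mult_self)
  obtain B where B0: "\<And>t. norm (psq ?x m t) \<le> B" using cont_bounded[OF cU psq_cont[where g="xF F" and m=m, OF xCX]] by blast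
  then have B: "\<And>t. psq ?x m t \<le> B" by (metis abs_le_D1 real_norm_def)
  define M where "M = (SUP t. psq ?x m t)"
  have le: "psq ?x m t \<le> M" for t unfolding M_def
    by (rule cSUP_upper) (use B in \<open>auto intro!: bdd_aboveI2[where M=B]\<close>)
  have M0: "M \<ge> 0" using le[of t] psq_nonneg[of ?x m t] by linarith
  have dn: "dual_norm (rho g m) \<le> sqrt M"
  proof (rule dual_norm_le, rule supnorm_least)
    fix a :: "nat \<Rightarrow> 'a \<Rightarrow> complex" and t :: 'a
    assume a: "a \<in> l2" and a1: "l2_norm a \<le> 1"
    have "norm (rho g m a t) \<le> sqrt (\<Sum>i<m. (cmod (g i t))^2) * sqrt (\<Sum>i<m. (cmod (a i t))^2)"
      unfolding rho_def by (rule CS_fin)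
    also have "\<dots> \<le> sqrt M * 1"
    proof (rule mult_mono)
      show "sqrt (\<Sum>i<m. (cmod (g i t))^2) \<le> sqrt M" using le[of t] by (simp add: g_def psq_def)
      have "(\<Sum>i<m. (cmod (a i t))^2) \<le> (l2_norm a)^2"
        using psq_le_ssq[where a=a and t=t and n=m, OF l2D_summable[OF cU a]] ssq_le_l2_norm[OF cU a, of t]
        by (simp add: psq_def)
      also have "\<dots> \<le> 1" using a1 l2_norm_nonneg[OF cU a] by (simp add: power_le_one)
      finally show "sqrt (\<Sum>i<m. (cmod (a i t))^2) \<le> 1" by simp
    qed (auto simp: M0 intro: sum_nonneg)
    finally show "norm (rho g m a t) \<le> sqrt M" by simp
  qed
  have "psq ?x m t \<le> D * sqrt M" for t
  proof -
    have "psq ?x m t = cmod (F (rho g m) t)" by (simp add: Frho psq_nonneg)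
    also have "\<dots> \<le> D * dual_norm (rho g m)" by (rule d2_pt[OF cU F \<rho> D])
    also have "\<dots> \<le> D * sqrt M" using dn D0 by (rule mult_left_mono)
    finally show ?thesis .
  qed
  then have "M \<le> D * sqrt M" unfolding M_def by (intro cSUP_least) auto
  then have "M \<le> D^2" using sqrt_bound_aux M0 D0 by blast
  then show ?thesis using le[of t] by linarith
qed

lemma sum_if_ivl:
  fixes m n :: nat
  shows "(\<Sum>i<m. if i < n then 0 else f i) = (\<Sum>i\<in>{n..<m}. f i)"
  by (induction m) (auto simp: atLeastLessThanSuc add.commute)

lemma loc:
  fixes F :: "((nat \<Rightarrow> 'a::t2_space \<Rightarrow> complex) \<Rightarrow> ('a \<Rightarrow> complex)) \<Rightarrow> ('a \<Rightarrow> complex)"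
    and \<tau> :: "(nat \<Rightarrow> 'a \<Rightarrow> complex) \<Rightarrow> ('a \<Rightarrow> complex)" and n :: nat and W :: "'a set" and \<delta> :: real
  assumes cU: "compact (UNIV::'a set)" and F: "F \<in> dual2" and D0: "D \<ge> 0"
    and D: "\<And>\<tau>. \<tau> \<in> dual1 \<Longrightarrow> supnorm (F \<tau>) \<le> D * dual_norm \<tau>"
    and \<tau>: "\<tau> \<in> dual1" and W: "open W" "t0 \<in> W" and \<delta>0: "\<delta> \<ge> 0"
    and hyp: "\<And>t m. t \<in> W \<Longrightarrow> (\<Sum>i\<in>{n..<m}. (cmod (coef \<tau> i t))^2) \<le> \<delta>"
  shows "cmod (F \<tau> t0 - (\<Sum>i<n. cnj (xF F i t0) * cnj (coef \<tau> i t0))) \<le> D * sqrt \<delta>"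
proof -
  let ?g = "coef \<tau>"
  have gCX: "?g i \<in> CX" for i by (rule d1_coef_CX[OF \<tau>])
  have \<rho>: "rho ?g n \<in> dual1" by (rule rho_dual1[OF cU gCX])
  have m1: "(\<lambda>t. -1) \<in> CX" by simp
  define \<omega> where "\<omega> = dual_add \<tau> (dual_scale (rho ?g n) (\<lambda>t. -1))"
  have \<omega>: "\<omega> \<in> dual1" unfolding \<omega>_def by (intro dual_add_dual1[OF cU \<tau>] dual_scale_dual1[OF cU \<rho> m1])
  have \<omega>a: "\<omega> a t = \<tau> (Ph n a) t" if a: "a \<in> l2" for a t
    using d1_split[OF cU \<tau> a, of t n] by (simp add: \<omega>_def dual_add_def dual_scale_def rho_def)
  have bPh: "cmod (\<tau> (Ph n a) t) \<le> sqrt \<delta> * l2_norm a" if a: "a \<in> l2" and t: "t \<in> W" for a t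
  proof -
    have "(\<lambda>i. coef \<tau> i t * Ph n a i t) sums \<tau> (Ph n a) t" by (rule d1_sums[OF cU \<tau> Ph_l2[OF cU a]])
    moreover have "(\<lambda>i. coef \<tau> i t * Ph n a i t) = (\<lambda>i. (if i < n then 0 else coef \<tau> i t) * a i t)"
      by (auto simp: Ph_def fun_eq_iff)
    ultimately have s: "(\<lambda>i. (if i < n then 0 else coef \<tau> i t) * a i t) sums \<tau> (Ph n a) t" by simp
    have "cmod (\<tau> (Ph n a) t) \<le> sqrt \<delta> * sqrt ((l2_norm a)^2)"
    proof (rule CS_inf[OF s])
      show "(\<Sum>i<m. (cmod (if i < n then 0 else coef \<tau> i t))^2) \<le> \<delta>" for m
      proof -
        have "(\<Sum>i<m. (cmod (if i < n then 0 else coef \<tau> i t))^2) = (\<Sum>i<m. if i < n then 0 else (cmod (coef \<tau> i t))^2)"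
          by (intro sum.cong) auto
        then show ?thesis using hyp[OF t, of m] by (simp add: sum_if_ivl)
      qed
      show "(\<Sum>i<m. (cmod (a i t))^2) \<le> (l2_norm a)^2" for m
        using psq_le_ssq[where a=a and t=t and n=m, OF l2D_summable[OF cU a]] ssq_le_l2_norm[OF cU a, of t]
        by (simp add: psq_def)
    qed
    then show ?thesis using l2_norm_nonneg[OF cU a] by simp
  qed
  obtain f :: "'a \<Rightarrow> real" where f: "continuous_on UNIV f" "f t0 = 1" "\<And>t. 0 \<le> f t" "\<And>t. f t \<le> 1"
    "\<And>t. t \<notin> W \<Longrightarrow> f t = 0"
    using bump[OF cU W] by blast
  define fc where "fc = (\<lambda>t. complex_of_real (f t))"
  have fc: "fc \<in> CX" using f(1) by (auto simp: fc_def CX_def intro!: continuous_intros)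
  have \<omega>f: "dual_scale \<omega> fc \<in> dual1" by (rule dual_scale_dual1[OF cU \<omega> fc])
  have dn: "dual_norm (dual_scale \<omega> fc) \<le> sqrt \<delta>"
  proof (rule dual_norm_le, rule supnorm_least)
    fix a :: "nat \<Rightarrow> 'a \<Rightarrow> complex" and t :: 'a
    assume a: "a \<in> l2" and a1: "l2_norm a \<le> 1"
    show "norm (dual_scale \<omega> fc a t) \<le> sqrt \<delta>"
    proof (cases "t \<in> W")
      case True
      have "norm (dual_scale \<omega> fc a t) = f t * cmod (\<tau> (Ph n a) t)"
        using f(3)[of t] by (simp add: dual_scale_def fc_def \<omega>a[OF a] norm_mult)
      also have "\<dots> \<le> 1 * (sqrt \<delta> * 1)"
      proof (rule mult_mono)
        show "cmod (\<tau> (Ph n a) t) \<le> sqrt \<delta> * 1"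
          using bPh[OF a True] mult_left_mono[OF a1 real_sqrt_ge_zero[OF \<delta>0]] by linarith
      qed (use f in auto)
      finally show ?thesis by simp
    next
      case False then show ?thesis by (simp add: dual_scale_def fc_def f(5) \<delta>0)
    qed
  qed
  have "F (dual_scale \<omega> fc) t0 = F \<omega> t0" using d2_scale[OF F \<omega> fc] f(2) by (simp add: fc_def)
  also have "F \<omega> t0 = F \<tau> t0 - F (rho ?g n) t0"
    unfolding \<omega>_def using d2_add[OF F \<tau> dual_scale_dual1[OF cU \<rho> m1]] d2_scale[OF F \<rho> m1] by simp
  also have "F (rho ?g n) t0 = (\<Sum>i<n. cnj (xF F i t0) * cnj (coef \<tau> i t0))"
    by (simp add: F_rho[OF cU F gCX])
  finally have "cmod (F \<tau> t0 - (\<Sum>i<n. cnj (xF F i t0) * cnj (coef \<tau> i t0))) = cmod (F (dual_scale \<omega> fc) t0)"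
    by simp
  also have "\<dots> \<le> D * dual_norm (dual_scale \<omega> fc)" by (rule d2_pt[OF cU F \<omega>f D])
  also have "\<dots> \<le> D * sqrt \<delta>" using dn D0 by (rule mult_left_mono)
  finally show ?thesis .
qed

definition good :: "(nat \<Rightarrow> 'a::topological_space \<Rightarrow> complex) \<Rightarrow> 'a \<Rightarrow> bool" where
  "good g t0 \<longleftrightarrow> (\<forall>\<epsilon>>0. \<exists>n W. open W \<and> t0 \<in> W \<and> (\<forall>t\<in>W. \<forall>m. (\<Sum>i\<in>{n..<m}. (cmod (g i t))^2) \<le> \<epsilon>))"

lemma good_mono:
  assumes "\<And>i t. cmod (h i t) \<le> cmod (g i t)" "good g t0"
  shows "good h t0"
  unfolding good_def
proof (intro allI impI)
  fix \<epsilon> :: real assume "\<epsilon> > 0"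
  have "\<exists>n W. open W \<and> t0 \<in> W \<and> (\<forall>t\<in>W. \<forall>m. (\<Sum>i\<in>{n..<m}. (cmod (g i t))^2) \<le> \<epsilon>)"
    using assms(2)[unfolded good_def, rule_format, OF \<open>\<epsilon> > 0\<close>] .
  then obtain n W where W: "open W" "t0 \<in> W" "\<And>t m. t \<in> W \<Longrightarrow> (\<Sum>i\<in>{n..<m}. (cmod (g i t))^2) \<le> \<epsilon>"
    by blast
  have "(\<Sum>i\<in>{n..<m}. (cmod (h i t))^2) \<le> \<epsilon>" if "t \<in> W" for t m
  proof -
    have "(\<Sum>i\<in>{n..<m}. (cmod (h i t))^2) \<le> (\<Sum>i\<in>{n..<m}. (cmod (g i t))^2)"
      by (intro sum_mono power_mono assms(1)) auto
    then show ?thesis using W(3)[OF that, of m] by linarith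
  qed
  then show "\<exists>n W. open W \<and> t0 \<in> W \<and> (\<forall>t\<in>W. \<forall>m. (\<Sum>i\<in>{n..<m}. (cmod (h i t))^2) \<le> \<epsilon>)"
    using W(1,2) by (intro exI[of _ n] exI[of _ W]) simp
qed

lemma good_sums:
  fixes F :: "((nat \<Rightarrow> 'a::t2_space \<Rightarrow> complex) \<Rightarrow> ('a \<Rightarrow> complex)) \<Rightarrow> ('a \<Rightarrow> complex)"
  assumes cU: "compact (UNIV::'a set)" and F: "F \<in> dual2" and D0: "D \<ge> 0"
    and D: "\<And>\<tau>. \<tau> \<in> dual1 \<Longrightarrow> supnorm (F \<tau>) \<le> D * dual_norm \<tau>"
    and \<tau>: "\<tau> \<in> dual1" and g: "good (coef \<tau>) t0"
  shows "(\<lambda>i. cnj (xF F i t0) * cnj (coef \<tau> i t0)) sums F \<tau> t0"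
  unfolding sums_def LIMSEQ_iff
proof (intro allI impI)
  fix r :: real assume "r > 0"
  define \<epsilon> where "\<epsilon> = (r / (D+1))^2"
  have "\<epsilon> > 0" using \<open>r > 0\<close> D0 by (simp add: \<epsilon>_def)
  have se: "D * sqrt \<epsilon> < r"
  proof -
    have "sqrt \<epsilon> = r / (D+1)" using \<open>r>0\<close> D0 by (simp add: \<epsilon>_def)
    then have "D * sqrt \<epsilon> = r * (D / (D+1))" by simp
    also have "\<dots> < r * 1" using \<open>r>0\<close> D0 by (intro mult_strict_left_mono) auto
    finally show ?thesis by simp
  qed
  have "\<exists>n W. open W \<and> t0 \<in> W \<and> (\<forall>t\<in>W. \<forall>m. (\<Sum>i\<in>{n..<m}. (cmod (coef \<tau> i t))^2) \<le> \<epsilon>)"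
    using g[unfolded good_def, rule_format, OF \<open>\<epsilon> > 0\<close>] .
  then obtain n0 W where W: "open W" "t0 \<in> W" "\<And>t m. t \<in> W \<Longrightarrow> (\<Sum>i\<in>{n0..<m}. (cmod (coef \<tau> i t))^2) \<le> \<epsilon>"
    by blast
  show "\<exists>no. \<forall>n\<ge>no. cmod ((\<Sum>i<n. cnj (xF F i t0) * cnj (coef \<tau> i t0)) - F \<tau> t0) < r"
  proof (intro exI[of _ n0] allI impI)
    fix n assume "n0 \<le> n"
    have hyp: "(\<Sum>i\<in>{n..<m}. (cmod (coef \<tau> i t))^2) \<le> \<epsilon>" if "t \<in> W" for t m
    proof -
      have "(\<Sum>i\<in>{n..<m}. (cmod (coef \<tau> i t))^2) \<le> (\<Sum>i\<in>{n0..<m}. (cmod (coef \<tau> i t))^2)"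
        by (rule sum_mono2) (use \<open>n0 \<le> n\<close> in auto)
      then show ?thesis using W(3)[OF that, of m] by linarith
    qed
    have "cmod ((\<Sum>i<n. cnj (xF F i t0) * cnj (coef \<tau> i t0)) - F \<tau> t0)
          = cmod (F \<tau> t0 - (\<Sum>i<n. cnj (xF F i t0) * cnj (coef \<tau> i t0)))"
      by (rule norm_minus_commute)
    also have "\<dots> \<le> D * sqrt \<epsilon>"
      by (rule loc[OF cU F D0 D \<tau> W(1,2)]) (use \<open>\<epsilon> > 0\<close> hyp in auto)
    finally show "cmod ((\<Sum>i<n. cnj (xF F i t0) * cnj (coef \<tau> i t0)) - F \<tau> t0) < r" using se by simp
  qed
qed

lemma ivl_le_tail:
  fixes f :: "nat \<Rightarrow> real"
  assumes s: "summable f" and nn: "\<And>i. f i \<ge> 0"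
  shows "(\<Sum>i\<in>{n..<m}. f i) \<le> (\<Sum>i. f (i+n))"
proof -
  have ss: "summable (\<lambda>i. f (i+n))" using summable_iff_shift[of f n] s by simp
  show ?thesis
  proof (cases "m \<le> n")
    case True
    then show ?thesis using suminf_nonneg[OF ss] nn by simp
  next
    case False
    then obtain k where k: "m = k + n" by (metis add.commute le_add_diff_inverse nat_le_linear)
    have "(\<Sum>i\<in>{n..<m}. f i) = (\<Sum>i<k. f (i+n))" using sum_shift_le[where f=f and m=k and n=n] k by (simp add: add.commute)
    also have "\<dots> \<le> (\<Sum>i. f (i+n))" by (rule sum_le_suminf[OF ss]) (use nn in auto)
    finally show ?thesis .
  qed
qed

lemma good_dense:
  fixes g :: "nat \<Rightarrow> 'a::t2_space \<Rightarrow> complex"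
  assumes cU: "compact (UNIV::'a set)" and gCX: "\<And>i. g i \<in> CX" and gB: "\<And>m t. psq g m t \<le> B"
  shows "closure {t. good g t} = UNIV"
proof -
  define E where "E k n = {t. \<forall>m. (\<Sum>i\<in>{n..<m}. (cmod (g i t))^2) \<le> 1 / real (Suc k)}" for k n
  have closedE: "closed (E k n)" for k n
  proof -
    have "E k n = (\<Inter>m. {t. (\<Sum>i\<in>{n..<m}. (cmod (g i t))^2) \<le> 1 / real (Suc k)})"
      by (auto simp: E_def)
    moreover have "closed {t. (\<Sum>i\<in>{n..<m}. (cmod (g i t))^2) \<le> 1 / real (Suc k)}" for m
      by (rule closed_Collect_le) (use gCX in \<open>auto simp: CX_def intro!: continuous_intros\<close>)
    ultimately show ?thesis by auto
  qed
  have cover: "\<exists>n. t \<in> E k n" for k t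
  proof -
    have s: "summable (\<lambda>i. (cmod (g i t))^2)" by (rule psq_summable[OF gB])
    obtain N where N: "\<And>n. n \<ge> N \<Longrightarrow> norm (\<Sum>i. (cmod (g (i+n) t))^2) < 1 / real (Suc k)"
      using suminf_exist_split[OF _ s, of "1 / real (Suc k)"] by auto
    have "(\<Sum>i\<in>{N..<m}. (cmod (g i t))^2) \<le> 1 / real (Suc k)" for m
    proof -
      have "(\<Sum>i\<in>{N..<m}. (cmod (g i t))^2) \<le> (\<Sum>i. (cmod (g (i+N) t))^2)"
        by (rule ivl_le_tail[OF s]) simp
      also have "\<dots> \<le> norm (\<Sum>i. (cmod (g (i+N) t))^2)" by simp
      finally show ?thesis using N[of N] by simp
    qed
    then show ?thesis by (auto simp: E_def)
  qed
  define G where "G k = (\<Union>n. interior (E k n))" for k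
  have openG: "open (G k)" for k by (auto simp: G_def)
  have lcr: "locally_compact_space (euclidean::'a topology) \<and> regular_space (euclidean::'a topology)"
    using compact_imp_locally_compact_space[OF cs_euc[OF cU]] reg_euc[OF cU] by blast
  have denseG: "closure (G k) = UNIV" for k
  proof -
    define H where "H = range (\<lambda>n. E k n - interior (E k n))"
    have "euclidean interior_of \<Union>H = {}"
    proof (rule Baire_category_alt)
      show "countable H" by (simp add: H_def)
      fix T assume "T \<in> H"
      then obtain n where T: "T = E k n - interior (E k n)" by (auto simp: H_def)
      have "closed T" unfolding T by (intro closed_Diff closedE) auto
      moreover have "interior T = {}"
      proof -
        have "interior T \<subseteq> interior (E k n)" unfolding T by (rule interior_mono) auto
        moreover have "interior T \<subseteq> T" by (rule interior_subset)
        ultimately show ?thesis unfolding T by blast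
      qed
      ultimately show "closedin euclidean T \<and> euclidean interior_of T = {}" by simp
    qed (use lcr in auto)
    then have iH: "interior (\<Union>H) = {}" by simp
    have "- G k \<subseteq> \<Union>H"
    proof
      fix t assume "t \<in> - G k"
      obtain n where "t \<in> E k n" using cover by blast
      moreover have "t \<notin> interior (E k n)" using \<open>t \<in> - G k\<close> by (auto simp: G_def)
      ultimately show "t \<in> \<Union>H" by (auto simp: H_def)
    qed
    then have "interior (- G k) = {}" using iH interior_mono by blast
    then have "- closure (G k) = {}" by (simp add: interior_complement)
    then show ?thesis by blast
  qed
  have "euclidean closure_of \<Inter>(range G) = topspace euclidean"
  proof (rule Baire_category)
    fix T assume "T \<in> range G"
    then show "openin euclidean T \<and> euclidean closure_of T = topspace euclidean"
      using openG denseG by auto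
  qed (use lcr in auto)
  then have cl: "closure (\<Inter>(range G)) = UNIV" by simp
  have "\<Inter>(range G) \<subseteq> {t. good g t}"
  proof
    fix t assume t: "t \<in> \<Inter>(range G)"
    have "good g t" unfolding good_def
    proof (intro allI impI)
      fix \<epsilon> :: real assume "\<epsilon> > 0"
      then obtain n0 :: nat where "n0 > 0" "inverse (real n0) < \<epsilon>" using ex_inverse_of_nat_less by blast
      then obtain k where k: "1 / real (Suc k) < \<epsilon>"
        by (metis Suc_pred inverse_eq_divide)
      have "t \<in> G k" using t by blast
      then obtain n where n: "t \<in> interior (E k n)" by (auto simp: G_def)
      have "\<forall>s\<in>interior (E k n). \<forall>m. (\<Sum>i\<in>{n..<m}. (cmod (g i s))^2) \<le> \<epsilon>"
      proof (intro ballI allI)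
        fix s m assume "s \<in> interior (E k n)"
        then have "s \<in> E k n" using interior_subset by blast
        then show "(\<Sum>i\<in>{n..<m}. (cmod (g i s))^2) \<le> \<epsilon>" using k by (auto simp: E_def intro: order_trans)
      qed
      then show "\<exists>n W. open W \<and> t \<in> W \<and> (\<forall>s\<in>W. \<forall>m. (\<Sum>i\<in>{n..<m}. (cmod (g i s))^2) \<le> \<epsilon>)"
        using n by (intro exI[of _ n] exI[of _ "interior (E k n)"]) auto
    qed
    then show "t \<in> {t. good g t}" by simp
  qed
  then have "closure (\<Inter>(range G)) \<subseteq> closure {t. good g t}" by (rule closure_mono)
  then show ?thesis using cl by auto
qed

lemma regular_nbhd:
  fixes q :: "'a::t2_space"
  assumes cU: "compact (UNIV::'a set)" and "open Op" "q \<in> Op"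
  shows "\<exists>W. open W \<and> q \<in> W \<and> closure W \<subseteq> Op"
proof -
  have "closedin euclidean (- Op)" using assms by (simp add: closed_open)
  moreover have "q \<in> topspace euclidean - (-Op)" using assms by simp
  ultimately obtain U V where "openin euclidean U" "openin euclidean V" "q \<in> U" "-Op \<subseteq> V" "disjnt U V"
    using reg_euc[OF cU] unfolding regular_space_def by metis
  then have "open U" "open V" "U \<subseteq> - V" by (auto simp: disjnt_def)
  then have "closure U \<subseteq> - V" by (simp add: closure_minimal open_closed)
  then show ?thesis using \<open>open U\<close> \<open>q \<in> U\<close> \<open>-Op \<subseteq> V\<close> by blast
qed

lemma uf_Inter:
  assumes "U \<in> ultrafilters_nat" "finite V" "V \<subseteq> U"
  shows "\<Inter>V \<in> U"
  using assms(2,3)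
proof (induction V rule: finite_induct)
  case empty then show ?case using assms(1) by (simp add: ultrafilters_nat_def)
next
  case (insert x F) then show ?case using assms(1) by (simp add: ultrafilters_nat_def)
qed

lemma betaN_topspace: "topspace betaN = ultrafilters_nat"
  unfolding betaN_def topology_generated_by_topspace
  by (auto simp: ultrafilters_nat_def)

lemma betaN_embed:
  fixes t :: "nat \<Rightarrow> 'a::t2_space"
  assumes cU: "compact (UNIV::'a set)"
    and sep: "\<And>S. closure (t`S) \<inter> closure (t`(-S)) = {}"
  shows "\<exists>K::'a set. closed K \<and> subtopology euclidean K homeomorphic_space betaN"
proof -
  define K where "K = closure (range t)"
  define \<psi> where "\<psi> q = {S. q \<in> closure (t`S)}" for q
  define UF where "UF = ultrafilters_nat"
  have cov: "q \<in> closure (t`S) \<or> q \<in> closure (t`(-S))" if "q \<in> K" for q S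
  proof -
    have "t`S \<union> t`(-S) = range t" by auto
    then show ?thesis using that unfolding K_def by (metis Un_iff closure_Un)
  qed
  have psi_uf: "\<psi> q \<in> UF" if "q \<in> K" for q
  proof -
    have "A \<inter> B \<in> \<psi> q" if "A \<in> \<psi> q" "B \<in> \<psi> q" for A B
    proof (rule ccontr)
      assume "A \<inter> B \<notin> \<psi> q"
      then have "q \<in> closure (t`(-(A\<inter>B)))" using cov[OF \<open>q \<in> K\<close>, of "A\<inter>B"] by (auto simp: \<psi>_def)
      then have "q \<in> closure (t`(-A)) \<or> q \<in> closure (t`(-B))"
        by (metis Compl_Int closure_Un image_Un Un_iff)
      then show False using that sep by (auto simp: \<psi>_def)
    qed
    moreover have "{} \<notin> \<psi> q" by (simp add: \<psi>_def)
    moreover have "UNIV \<in> \<psi> q" using that by (simp add: \<psi>_def K_def)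
    moreover have "B \<in> \<psi> q" if "A \<in> \<psi> q" "A \<subseteq> B" for A B
      using that closure_mono[of "t`A" "t`B"] by (auto simp: \<psi>_def)
    moreover have "A \<in> \<psi> q \<or> -A \<in> \<psi> q" for A using cov[OF that] by (auto simp: \<psi>_def)
    ultimately show ?thesis unfolding UF_def ultrafilters_nat_def by blast
  qed
  have key_open: "t -` Op \<in> \<psi> q" if "open Op" "q \<in> K" "q \<in> Op" for Op q
  proof -
    have "t ` (t -` Op) = Op \<inter> range t" by auto
    then show ?thesis using open_Int_closure_subset[OF \<open>open Op\<close>, of "range t"] that
      by (auto simp: \<psi>_def K_def)
  qed
  have psi_inj: "inj_on \<psi> K"
  proof (rule inj_onI, rule ccontr)
    fix q q' assume "q \<in> K" "q' \<in> K" "\<psi> q = \<psi> q'" "q \<noteq> q'"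
    then obtain Op Op' where "open Op" "open Op'" "q \<in> Op" "q' \<in> Op'" "Op \<inter> Op' = {}"
      using hausdorff[OF \<open>q \<noteq> q'\<close>] by blast
    then have "t -` Op \<in> \<psi> q'" using key_open[OF \<open>open Op\<close> \<open>q \<in> K\<close> \<open>q \<in> Op\<close>] \<open>\<psi> q = \<psi> q'\<close> by simp
    then have "q' \<in> closure (t ` (t -` Op))" by (simp add: \<psi>_def)
    moreover have "closure (t ` (t -` Op)) \<subseteq> - Op'"
      using \<open>Op \<inter> Op' = {}\<close> \<open>open Op'\<close>
      by (intro closure_minimal) (auto simp: open_closed)
    ultimately show False using \<open>q' \<in> Op'\<close> by blast
  qed
  have psi_surj: "\<exists>q\<in>K. \<psi> q = U" if "U \<in> UF" for U
  proof -
    have "UNIV \<inter> \<Inter>((\<lambda>A. closure (t`A)) ` U) \<noteq> {}"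
    proof (rule compact_imp_fip[OF cU])
      show "closed T" if "T \<in> (\<lambda>A. closure (t`A)) ` U" for T using that by auto
      fix F' assume "finite F'" "F' \<subseteq> (\<lambda>A. closure (t`A)) ` U"
      then obtain U' where U': "U' \<subseteq> U" "finite U'" "F' = (\<lambda>A. closure (t`A)) ` U'"
        by (meson finite_subset_image)
      have "\<Inter>U' \<in> U" using uf_Inter U' that by (simp add: UF_def)
      then have "\<Inter>U' \<noteq> {}" using that by (auto simp: UF_def ultrafilters_nat_def)
      moreover have "t ` (\<Inter>U') \<subseteq> \<Inter>F'" using U' closure_subset by fastforce
      ultimately show "UNIV \<inter> \<Inter>F' \<noteq> {}" by blast
    qed
    then obtain q where q: "\<And>A. A \<in> U \<Longrightarrow> q \<in> closure (t`A)" by blast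
    have "UNIV \<in> U" using that by (simp add: UF_def ultrafilters_nat_def)
    then have "q \<in> K" using q by (simp add: K_def)
    have "\<psi> q = U"
    proof
      show "U \<subseteq> \<psi> q" using q by (auto simp: \<psi>_def)
      show "\<psi> q \<subseteq> U"
      proof
        fix S assume "S \<in> \<psi> q"
        show "S \<in> U"
        proof (rule ccontr)
          assume "S \<notin> U"
          then have "-S \<in> U" using that by (auto simp: UF_def ultrafilters_nat_def)
          then show False using q \<open>S \<in> \<psi> q\<close> sep by (auto simp: \<psi>_def)
        qed
      qed
    qed
    then show ?thesis using \<open>q \<in> K\<close> by blast
  qed
  define \<phi> where "\<phi> = inv_into K \<psi>"
  have phi: "\<phi> U \<in> K" "\<psi> (\<phi> U) = U" if UU: "U \<in> UF" for U
  proof -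
    obtain q where "q \<in> K" "\<psi> q = U" using psi_surj[OF UU] by blast
    then have "U \<in> \<psi> ` K" by blast
    then show "\<phi> U \<in> K" "\<psi> (\<phi> U) = U" unfolding \<phi>_def
      by (rule inv_into_into, rule f_inv_into_f)
  qed
  have phipsi: "\<phi> (\<psi> q) = q" if "q \<in> K" for q
    using psi_inj that unfolding \<phi>_def by simp
  have tsK: "topspace (subtopology euclidean K) = K" by simp
  have basis_pre: "openin (subtopology euclidean K) {q \<in> K. A \<in> \<psi> q}" for A
  proof -
    have "{q \<in> K. A \<in> \<psi> q} = (- closure (t`(-A))) \<inter> K"
      using cov sep by (auto simp: \<psi>_def)
    moreover have "open (- closure (t`(-A)))" by auto
    ultimately show ?thesis unfolding openin_subtopology by auto
  qed
  have cont_psi: "continuous_map (subtopology euclidean K) betaN \<psi>"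
    unfolding continuous_map_def
  proof (intro conjI allI impI)
    show "\<psi> \<in> topspace (subtopology euclidean K) \<rightarrow> topspace betaN"
      using psi_uf by (auto simp: betaN_topspace UF_def)
    fix Op assume "openin betaN Op"
    then have "generate_topology_on {{U \<in> ultrafilters_nat. A \<in> U} | A. True} Op"
      unfolding betaN_def by (rule openin_topology_generated_by)
    then show "openin (subtopology euclidean K) {x \<in> topspace (subtopology euclidean K). \<psi> x \<in> Op}"
    proof induction
      case Empty then show ?case by simp
    next
      case (Int a b)
      have "{x \<in> topspace (subtopology euclidean K). \<psi> x \<in> a \<inter> b} =
            {x \<in> topspace (subtopology euclidean K). \<psi> x \<in> a} \<inter> {x \<in> topspace (subtopology euclidean K). \<psi> x \<in> b}"
        by auto
      then show ?case using Int by (simp add: openin_Int)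
    next
      case (UN K')
      have "{x \<in> topspace (subtopology euclidean K). \<psi> x \<in> \<Union>K'} =
            \<Union>((\<lambda>k. {x \<in> topspace (subtopology euclidean K). \<psi> x \<in> k}) ` K')" by auto
      then show ?case using UN by (metis (no_types, lifting) imageE openin_Union)
    next
      case (Basis s)
      then obtain A where "s = {U \<in> ultrafilters_nat. A \<in> U}" by blast
      then have "{x \<in> topspace (subtopology euclidean K). \<psi> x \<in> s} = {q \<in> K. A \<in> \<psi> q}"
        using psi_uf by (auto simp: UF_def)
      then show ?case using basis_pre by simp
    qed
  qed
  have cont_phi: "continuous_map betaN (subtopology euclidean K) \<phi>"
    unfolding continuous_map_def
  proof (intro conjI allI impI)
    show "\<phi> \<in> topspace betaN \<rightarrow> topspace (subtopology euclidean K)"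
      using phi by (auto simp: betaN_topspace UF_def)
    fix V assume "openin (subtopology euclidean K) V"
    then obtain Op where "open Op" "V = Op \<inter> K" by (auto simp: openin_subtopology)
    define \<W> where "\<W> = {{U \<in> ultrafilters_nat. t -` W \<in> U} | W. open W \<and> closure W \<subseteq> Op}"
    have eq: "{x \<in> topspace betaN. \<phi> x \<in> V} = \<Union>\<W>"
    proof
      show "{x \<in> topspace betaN. \<phi> x \<in> V} \<subseteq> \<Union>\<W>"
      proof
        fix U assume "U \<in> {x \<in> topspace betaN. \<phi> x \<in> V}"
        then have U: "U \<in> UF" "\<phi> U \<in> Op" "\<phi> U \<in> K"
          using \<open>V = Op \<inter> K\<close> by (auto simp: betaN_topspace UF_def)
        obtain W where W: "open W" "\<phi> U \<in> W" "closure W \<subseteq> Op"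
          using regular_nbhd[OF cU \<open>open Op\<close> U(2)] by blast
        have "t -` W \<in> U" using key_open[OF W(1) U(3) W(2)] phi[OF U(1)] by simp
        then show "U \<in> \<Union>\<W>" using W U(1) unfolding \<W>_def UF_def by blast
      qed
      show "\<Union>\<W> \<subseteq> {x \<in> topspace betaN. \<phi> x \<in> V}"
      proof
        fix U assume "U \<in> \<Union>\<W>"
        then obtain W where W: "open W" "closure W \<subseteq> Op" "U \<in> UF" "t -` W \<in> U"
          unfolding \<W>_def UF_def by blast
        then have "t -` W \<in> \<psi> (\<phi> U)" using phi[OF W(3)] by simp
        then have "\<phi> U \<in> closure (t ` (t -` W))" unfolding \<psi>_def by simp
        moreover have "closure (t ` (t -` W)) \<subseteq> closure W" by (simp add: closure_mono image_subset_iff)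
        ultimately have "\<phi> U \<in> Op" using W by blast
        then show "U \<in> {x \<in> topspace betaN. \<phi> x \<in> V}"
          using phi[OF W(3)] W(3) \<open>V = Op \<inter> K\<close> by (auto simp: betaN_topspace UF_def)
      qed
    qed
    have "generate_topology_on {{U \<in> ultrafilters_nat. A \<in> U} | A. True} (\<Union>\<W>)"
      by (rule generate_topology_on.UN) (auto simp: \<W>_def intro!: generate_topology_on.Basis)
    then have "openin betaN (\<Union>\<W>)" unfolding betaN_def by (simp add: openin_topology_generated_by_iff)
    then show "openin betaN {x \<in> topspace betaN. \<phi> x \<in> V}" by (simp only: eq)
  qed
  have hm: "homeomorphic_maps (subtopology euclidean K) betaN \<psi> \<phi>"
    unfolding homeomorphic_maps_def using cont_psi cont_phi phi phipsi
    by (auto simp: betaN_topspace UF_def)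
  have "subtopology euclidean K homeomorphic_space betaN"
    unfolding homeomorphic_space_def by (rule exI[of _ \<psi>], rule exI[of _ \<phi>], rule hm)
  moreover have "closed K" by (simp add: K_def)
  ultimately show ?thesis by blast
qed

lemma final_eq:
  fixes F :: "((nat \<Rightarrow> 'a::t2_space \<Rightarrow> complex) \<Rightarrow> ('a \<Rightarrow> complex)) \<Rightarrow> ('a \<Rightarrow> complex)"
  assumes cU: "compact (UNIV::'a set)" and F: "F \<in> dual2" and D0: "D \<ge> 0"
    and D: "\<And>\<tau>. \<tau> \<in> dual1 \<Longrightarrow> supnorm (F \<tau>) \<le> D * dual_norm \<tau>"
    and x: "xF F \<in> l2" and \<tau>: "\<tau> \<in> dual1"
  shows "F \<tau> = canonical_l2 (xF F) \<tau>"
proof -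
  let ?x = "xF F"
  obtain C where C0: "C \<ge> 0" and C: "\<And>a. a \<in> l2 \<Longrightarrow> supnorm (\<tau> a) \<le> C * l2_norm a"
    using d1_bound[OF cU \<tau>] by blast
  have gCX: "coef \<tau> i \<in> CX" for i by (rule d1_coef_CX[OF \<tau>])
  have dense: "closure {t. good (coef \<tau>) t} = UNIV"
    by (rule good_dense[OF cU gCX d1_coef_bound[OF cU \<tau> C0 C]])
  have cl: "closed {t. F \<tau> t = cnj (\<tau> ?x t)}"
    by (rule closed_Collect_eq) (use d2_CX[OF F \<tau>] d1_CX[OF \<tau> x] in \<open>auto simp: CX_def intro!: continuous_intros\<close>)
  have "{t. good (coef \<tau>) t} \<subseteq> {t. F \<tau> t = cnj (\<tau> ?x t)}"
  proof
    fix t0 assume "t0 \<in> {t. good (coef \<tau>) t}"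
    then have g: "good (coef \<tau>) t0" by simp
    have s1: "(\<lambda>i. cnj (?x i t0) * cnj (coef \<tau> i t0)) sums F \<tau> t0"
      by (rule good_sums[OF cU F D0 D \<tau> g])
    have "(\<lambda>i. cnj (coef \<tau> i t0 * ?x i t0)) sums cnj (\<tau> ?x t0)"
      by (rule sums_cnj[THEN iffD2], rule d1_sums[OF cU \<tau> x])
    then have s2: "(\<lambda>i. cnj (?x i t0) * cnj (coef \<tau> i t0)) sums cnj (\<tau> ?x t0)"
      by (simp add: mult.commute)
    show "t0 \<in> {t. F \<tau> t = cnj (\<tau> ?x t)}" using sums_unique2[OF s1 s2] by simp
  qed
  then have "closure {t. good (coef \<tau>) t} \<subseteq> {t. F \<tau> t = cnj (\<tau> ?x t)}"
    using cl by (rule closure_minimal)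
  then show ?thesis using dense by (auto simp: canonical_l2_def fun_eq_iff)
qed

lemma psq_diff:
  assumes "a \<le> b"
  shows "psq g b t - psq g a t = (\<Sum>i\<in>{a..<b}. (cmod (g i t))^2)"
proof -
  have "psq g b t = (\<Sum>i\<in>{0..<a}. (cmod (g i t))^2) + (\<Sum>i\<in>{a..<b}. (cmod (g i t))^2)"
    unfolding psq_def using sum.atLeastLessThan_concat[of 0 a b "\<lambda>i. (cmod (g i t))^2"] assms by (simp add: atLeast0LessThan)
  then show ?thesis by (simp add: psq_def atLeast0LessThan)
qed

lemma x_l2:
  fixes F :: "((nat \<Rightarrow> 'a::t2_space \<Rightarrow> complex) \<Rightarrow> ('a \<Rightarrow> complex)) \<Rightarrow> ('a \<Rightarrow> complex)"
  assumes cU: "compact (UNIV::'a set)" and F: "F \<in> dual2" and D0: "D \<ge> 0"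
    and D: "\<And>\<tau>. \<tau> \<in> dual1 \<Longrightarrow> supnorm (F \<tau>) \<le> D * dual_norm \<tau>"
    and noBN: "\<not> (\<exists>K :: 'a set. closed K \<and> subtopology euclidean K homeomorphic_space betaN)"
  shows "xF F \<in> l2"
proof (rule ccontr)
  assume nx: "xF F \<notin> l2"
  let ?x = "xF F"
  have xCX: "?x i \<in> CX" for i by (rule xF_CX[OF cU F])
  have xB: "psq ?x m t \<le> D^2" for m t by (rule xF_bound[OF cU F D0 D])
  have sx: "summable (\<lambda>i. (cmod (?x i t))^2)" for t by (rule psq_summable[OF xB])
  have lim: "(\<lambda>m. psq ?x m t) \<longlonglongrightarrow> ssq ?x t" for t by (rule psq_tendsto[OF sx])
  have le_ssq: "psq ?x m t \<le> ssq ?x t" for m t by (rule psq_le_ssq[OF sx])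
  have mono: "m \<le> n \<Longrightarrow> psq ?x m t \<le> psq ?x n t" for m n t by (rule psq_mono)
  have ev_gt: "\<exists>m. psq ?x m t > c" if "c < ssq ?x t" for c t
  proof -
    have "\<forall>\<^sub>F m in sequentially. psq ?x m t > c" using order_tendstoD(1)[OF lim that] .
    then show ?thesis by (auto simp: eventually_sequentially)
  qed
  have "\<not> (\<forall>\<epsilon>>0. \<exists>N. \<forall>n\<ge>N. \<forall>t. ssq ?x t - psq ?x n t < \<epsilon>)"
    using l2I[OF xCX sx] nx by blast
  then obtain \<epsilon> where "\<epsilon> > 0" and fail: "\<And>N. \<exists>n\<ge>N. \<exists>t. \<not> ssq ?x t - psq ?x n t < \<epsilon>" by blast
  define e where "e = \<epsilon> / 2"
  have e0: "e > 0" using \<open>\<epsilon> > 0\<close> by (simp add: e_def)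
  define A where "A n = {t. \<exists>m. psq ?x m t - psq ?x n t > e}" for n
  have openA: "open (A n)" for n
  proof -
    have "A n = (\<Union>m. {t. e < psq ?x m t - psq ?x n t})" by (auto simp: A_def)
    moreover have "open {t. e < psq ?x m t - psq ?x n t}" for m
      by (rule open_Collect_less) (use psq_cont[OF xCX] in \<open>auto intro!: continuous_intros\<close>)
    ultimately show ?thesis by auto
  qed
  have neA: "A n \<noteq> {}" for n
  proof -
    obtain n' t where "n' \<ge> n" "\<not> ssq ?x t - psq ?x n' t < \<epsilon>" using fail by blast
    then have "psq ?x n t + e < ssq ?x t" using mono[of n n' t] e0 by (simp add: e_def)
    then obtain m where "psq ?x m t > psq ?x n t + e" using ev_gt by blast
    then have "t \<in> A n" unfolding A_def by (intro CollectI exI[of _ m]) simp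
    then show ?thesis by blast
  qed
  have decA: "A n \<subseteq> A m" if "m \<le> n" for m n
  proof
    fix t assume "t \<in> A n"
    then obtain k where k: "e < psq ?x k t - psq ?x n t" by (auto simp: A_def)
    have "e < psq ?x k t - psq ?x m t" using k mono[OF that, of t] by linarith
    then show "t \<in> A m" unfolding A_def by (intro CollectI exI[of _ k])
  qed
  have "UNIV \<inter> \<Inter>(range (\<lambda>n. closure (A n))) \<noteq> {}"
  proof (rule compact_imp_fip[OF cU])
    show "closed T" if "T \<in> range (\<lambda>n. closure (A n))" for T using that by auto
    fix F' assume "finite F'" "F' \<subseteq> range (\<lambda>n. closure (A n))"
    then obtain N' where N': "N' \<subseteq> UNIV" "finite N'" "F' = (\<lambda>n. closure (A n)) ` N'"
      by (meson finite_subset_image)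
    define M where "M = Max (insert 0 N')"
    have "A M \<subseteq> \<Inter>F'"
    proof
      fix t assume "t \<in> A M"
      show "t \<in> \<Inter>F'"
      proof
        fix T assume "T \<in> F'"
        then obtain j where j: "j \<in> N'" "T = closure (A j)" using N' by blast
        have "j \<le> M" using j N' by (simp add: M_def)
        then show "t \<in> T" using decA[of j M] \<open>t \<in> A M\<close> closure_subset j by blast
      qed
    qed
    then show "UNIV \<inter> \<Inter>F' \<noteq> {}" using neA[of M] by blast
  qed
  then obtain p where p: "\<And>n. p \<in> closure (A n)" by blast
  obtain n0 where n0': "psq ?x n0 p > ssq ?x p - e/8"
    using ev_gt[of "ssq ?x p - e/8" p] e0 by auto
  then have n0: "ssq ?x p - psq ?x n0 p < e/8" by linarith
  have dense: "closure {t. good ?x t} = UNIV" by (rule good_dense[OF cU xCX xB])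
  define P where "P m t m' \<longleftrightarrow> good ?x t \<and> psq ?x m t - psq ?x n0 t < e/4 \<and> e < psq ?x m' t - psq ?x m t
       \<and> ssq ?x t - psq ?x m' t < e/8 \<and> m < m'" for m t m'
  have step: "\<exists>t m'. P m t m'" for m
  proof -
    define O1 where "O1 = {t. psq ?x m t - psq ?x n0 t < e/4}"
    have oO1: "open O1" unfolding O1_def
      by (rule open_Collect_less) (use psq_cont[OF xCX] in \<open>auto intro!: continuous_intros\<close>)
    have "p \<in> O1" using le_ssq[of m p] n0 e0 by (simp add: O1_def)
    then have "O1 \<inter> closure (A m) \<noteq> {}" using p by blast
    then have ne: "O1 \<inter> A m \<noteq> {}" using open_Int_closure_eq_empty[OF oO1] by blast
    have oV: "open (O1 \<inter> A m)" using oO1 openA by auto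
    have "(O1 \<inter> A m) \<inter> closure {t. good ?x t} \<noteq> {}" using ne dense by simp
    then have "(O1 \<inter> A m) \<inter> {t. good ?x t} \<noteq> {}" using open_Int_closure_eq_empty[OF oV] by blast
    then obtain t where t: "t \<in> O1" "t \<in> A m" "good ?x t" by blast
    obtain m1 where m1: "e < psq ?x m1 t - psq ?x m t" using t(2) by (auto simp: A_def)
    obtain m2 where m2: "psq ?x m2 t > ssq ?x t - e/8" using ev_gt[of "ssq ?x t - e/8" t] e0 by auto
    define m' where "m' = max (max m1 m2) (Suc m)"
    have "psq ?x m1 t \<le> psq ?x m' t" "psq ?x m2 t \<le> psq ?x m' t" by (auto intro!: mono simp: m'_def)
    then have "P m t m'" using t m1 m2 by (auto simp: P_def O1_def m'_def)
    then show ?thesis by blast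
  qed
  then have "\<forall>m. \<exists>q. P m (fst q) (snd q)" by auto
  then obtain q where q: "\<And>m. P m (fst (q m)) (snd (q m))" by (metis choice)
  define Mn where "Mn m = snd (q m)" for m
  define mk where "mk k = (Mn ^^ k) n0" for k
  define tk where "tk k = fst (q (mk k))" for k
  have mk_Suc: "mk (Suc k) = Mn (mk k)" for k by (simp add: mk_def)
  have Pk: "P (mk k) (tk k) (mk (Suc k))" for k using q[of "mk k"] by (simp add: tk_def mk_Suc Mn_def)
  have smono: "strict_mono mk" unfolding strict_mono_Suc_iff using Pk by (auto simp: P_def)
  have mk_le: "i \<le> j \<Longrightarrow> mk i \<le> mk j" for i j using smono by (simp add: strict_mono_less_eq)
  have mk0: "mk 0 = n0" by (simp add: mk_def)
  have sep: "closure (tk ` S) \<inter> closure (tk ` (- S)) = {}" for S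
  proof -
    define \<beta> where "\<beta> i \<longleftrightarrow> (\<exists>j\<in>S. mk j \<le> i \<and> i < mk (Suc j))" for i
    define \<gamma> where "\<gamma> = (\<lambda>i t. if \<beta> i then cnj (?x i t) else 0)"
    have \<gamma>CX: "\<gamma> i \<in> CX" for i using CX_cnj[OF xCX] by (cases "\<beta> i") (auto simp: \<gamma>_def)
    have \<gamma>le: "cmod (\<gamma> i t) \<le> cmod (?x i t)" for i t by (auto simp: \<gamma>_def)
    have \<gamma>B: "psq \<gamma> m t \<le> D^2" for m t
    proof -
      have "psq \<gamma> m t \<le> psq ?x m t" unfolding psq_def by (intro sum_mono power_mono \<gamma>le) auto
      then show ?thesis using xB[of m t] by linarith
    qed
    have \<tau>S: "tauf \<gamma> \<in> dual1" and c\<tau>S: "coef (tauf \<gamma>) = \<gamma>" using tauI[OF cU \<gamma>CX \<gamma>B] by auto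
    define h where "h = F (tauf \<gamma>)"
    have hCX: "h \<in> CX" unfolding h_def by (rule d2_CX[OF F \<tau>S])
    define u where "u t i = (if \<beta> i then (cmod (?x i t))^2 else 0)" for t i
    have su: "summable (u t)" for t
      by (rule summable_comparison_test[OF _ sx[of t]]) (auto simp: u_def)
    have key: "Re (h t) = suminf (u t)" if g: "good ?x t" for t
    proof -
      have "good \<gamma> t" by (rule good_mono[OF \<gamma>le g])
      then have "good (coef (tauf \<gamma>)) t" by (subst c\<tau>S)
      then have "(\<lambda>i. cnj (?x i t) * cnj (coef (tauf \<gamma>) i t)) sums h t"
        unfolding h_def using good_sums[OF cU F D0 D \<tau>S, of t] by blast
      moreover have "(\<lambda>i. cnj (?x i t) * cnj (coef (tauf \<gamma>) i t)) = (\<lambda>i. complex_of_real (u t i))"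
        unfolding c\<tau>S by (auto simp: \<gamma>_def u_def cnj_mult_self fun_eq_iff simp del: of_real_power)
      ultimately have "(\<lambda>i. complex_of_real (u t i)) sums h t" by simp
      moreover have "(\<lambda>i. complex_of_real (u t i)) sums complex_of_real (suminf (u t))"
        by (rule sums_of_real, rule summable_sums[OF su])
      ultimately have "h t = complex_of_real (suminf (u t))" by (rule sums_unique2)
      then show ?thesis by simp
    qed
    have inS: "Re (h (tk k)) > e" if "k \<in> S" for k
    proof -
      let ?t = "tk k"
      have "e < psq ?x (mk (Suc k)) ?t - psq ?x (mk k) ?t" using Pk[of k] by (simp add: P_def)
      also have "\<dots> = (\<Sum>i\<in>{mk k..<mk (Suc k)}. (cmod (?x i ?t))^2)"
        by (rule psq_diff) (simp add: mk_le)
      also have "\<dots> = (\<Sum>i\<in>{mk k..<mk (Suc k)}. u ?t i)"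
        using that by (intro sum.cong refl) (auto simp: u_def \<beta>_def)
      also have "\<dots> \<le> suminf (u ?t)" by (rule sum_le_suminf[OF su]) (auto simp: u_def)
      also have "\<dots> = Re (h ?t)" using key Pk[of k] by (simp add: P_def)
      finally show ?thesis .
    qed
    have notS: "Re (h (tk k)) < 3 * e / 8" if "k \<notin> S" for k
    proof -
      let ?t = "tk k"
      define w where "w i = (cmod (?x i ?t))^2" for i
      define v1 where "v1 i = (if i \<in> {n0..<mk k} then w i else 0)" for i
      define v2 where "v2 i = (if mk (Suc k) \<le> i then w i else 0)" for i
      have comb: "(n0 \<le> i \<and> i < mk k) \<or> mk (Suc k) \<le> i" if bi: "\<beta> i" for i
      proof -
        obtain j where j: "j \<in> S" "mk j \<le> i" "i < mk (Suc j)" using bi unfolding \<beta>_def by blast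
        have "j \<noteq> k" using j \<open>k \<notin> S\<close> by auto
        show ?thesis
        proof (cases "j < k")
          case True
          then have "mk (Suc j) \<le> mk k" by (intro mk_le) simp
          moreover have "n0 \<le> mk j" using mk_le[of 0 j] mk0 by simp
          ultimately show ?thesis using j by auto
        next
          case False
          then have "Suc k \<le> j" using \<open>j \<noteq> k\<close> by simp
          then have "mk (Suc k) \<le> mk j" by (rule mk_le)
          then show ?thesis using j by auto
        qed
      qed
      have uv: "u ?t i \<le> v1 i + v2 i" for i
        using comb[of i] by (auto simp: u_def v1_def v2_def w_def)
      have sw: "w sums ssq ?x ?t" unfolding w_def ssq_def by (rule summable_sums[OF sx])
      have s1: "v1 sums (psq ?x (mk k) ?t - psq ?x n0 ?t)"
      proof -
        have "v1 sums (\<Sum>i\<in>{n0..<mk k}. w i)" unfolding v1_def by (rule sums_If_finite_set) simp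
        moreover have "(\<Sum>i\<in>{n0..<mk k}. w i) = psq ?x (mk k) ?t - psq ?x n0 ?t"
          unfolding w_def by (rule psq_diff[symmetric]) (use mk_le[of 0 k] mk0 in simp)
        ultimately show ?thesis by simp
      qed
      have s2: "v2 sums (ssq ?x ?t - psq ?x (mk (Suc k)) ?t)"
      proof -
        have "(\<lambda>i. if i \<in> {..<mk (Suc k)} then w i else 0) sums (\<Sum>i\<in>{..<mk (Suc k)}. w i)"
          by (rule sums_If_finite_set) simp
        then have "(\<lambda>i. w i - (if i \<in> {..<mk (Suc k)} then w i else 0)) sums (ssq ?x ?t - (\<Sum>i\<in>{..<mk (Suc k)}. w i))"
          by (rule sums_diff[OF sw])
        moreover have "(\<lambda>i. w i - (if i \<in> {..<mk (Suc k)} then w i else 0)) = v2"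
          by (auto simp: v2_def fun_eq_iff)
        ultimately show ?thesis by (simp add: psq_def w_def)
      qed
      have "Re (h ?t) = suminf (u ?t)" using key Pk[of k] by (simp add: P_def)
      also have "\<dots> \<le> (\<Sum>i. v1 i + v2 i)"
        by (rule suminf_le[OF uv su]) (use s1 s2 in \<open>auto intro: summable_add simp: sums_iff\<close>)
      also have "\<dots> = (psq ?x (mk k) ?t - psq ?x n0 ?t) + (ssq ?x ?t - psq ?x (mk (Suc k)) ?t)"
        using sums_add[OF s1 s2] by (simp add: sums_iff)
      also have "\<dots> < e/4 + e/8" using Pk[of k] by (simp add: P_def)
      finally show ?thesis by simp
    qed
    have hc: "continuous_on UNIV (\<lambda>t. Re (h t))" using hCX by (auto simp: CX_def intro!: continuous_intros)
    have cl1: "closed {t. e \<le> Re (h t)}" by (rule closed_Collect_le[OF _ hc]) simp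
    have cl2: "closed {t. Re (h t) \<le> 3 * e / 8}" by (rule closed_Collect_le[OF hc]) simp
    have c1: "closure (tk ` S) \<subseteq> {t. e \<le> Re (h t)}"
      by (rule closure_minimal[OF _ cl1]) (use inS in \<open>auto intro: less_imp_le\<close>)
    have c2: "closure (tk ` (- S)) \<subseteq> {t. Re (h t) \<le> 3 * e / 8}"
      by (rule closure_minimal[OF _ cl2]) (use notS in \<open>auto intro: less_imp_le\<close>)
    show ?thesis using c1 c2 e0 by fastforce
  qed
  show False using betaN_embed[OF cU sep] noBN by blast
qed

theorem theorem4p1:
  assumes "compact (UNIV :: 'a::t2_space set)"
    and "\<not> (\<exists>K :: 'a set. closed K \<and> subtopology euclidean K homeomorphic_space betaN)"
  shows "l2_C_star_reflexive TYPE('a)"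
  unfolding l2_C_star_reflexive_def
proof
  fix F :: "((nat \<Rightarrow> 'a \<Rightarrow> complex) \<Rightarrow> ('a \<Rightarrow> complex)) \<Rightarrow> ('a \<Rightarrow> complex)"
  assume F: "F \<in> dual2"
  obtain D where D0: "D \<ge> 0" and D: "\<And>\<tau>. \<tau> \<in> dual1 \<Longrightarrow> supnorm (F \<tau>) \<le> D * dual_norm \<tau>"
    using d2_bound[OF assms(1) F] by blast
  have x: "xF F \<in> l2" by (rule x_l2[OF assms(1) F D0 D assms(2)])
  show "\<exists>x\<in>l2. \<forall>\<tau>\<in>dual1. F \<tau> = canonical_l2 x \<tau>"
    using final_eq[OF assms(1) F D0 D x] x by blast
qed

end
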